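(* Let $\Omega\subset\mathbb{R}^2$ be a bounded domain, $h>0$, and let $L^h:\mathbb{R}^{|\Omega^h|}\to\mathbb{R}^{|\Omega^h|}$ be the linear operator described in the context. Then $L^h$ is symmetric and positive semi-definite on $\mathbb{R}^{|\Omega^h|}$ (with respect to the Euclidean inner product), and $\ker(L^h)=\operatorname{Span}\{1_{\Omega^h}\}$, where $1_{\Omega^h}\equiv1$ on $\Omega^h$.
   Context: Grid: $x_i=ih$, $y_j=jh$, $x_{i\pm1/2}=(i\pm\frac12)h$; $C_{ij}=[x_{i-1/2},x_{i+1/2}]\times[y_{j-1/2},y_{j+1/2}]$, edges $E_{i+1/2,j}=\{x_{i+1/2}\}\times[y_{j-1/2},y_{j+1/2}]$, $E_{i,j+1/2}=[x_{i-1/2},x_{i+1/2}]\times\{y_{j+1/2}\}$. $\Omega^h=\{(x_i,y_j):C_{ij}\cap\Omega\ne\emptyset\}$. Heaviside: $H_{i+1/2,j}=\mathrm{length}(E_{i+1/2,j}\cap\Omega)/h$, $H_{i,j+1/2}=\mathrm{length}(E_{i,j+1/2}\cap\Omega)/h$. $(\operatorname{G}_xp)_{i+1/2,j}=(p_{i+1,j}-p_{ij})/h$, $(\operatorname{G}_yp)_{i,j+1/2}=(p_{i,j+1}-p_{ij})/h$; $(\operatorname{D}(u,v))_{ij}=(u_{i+1/2,j}-u_{i-1/2,j})/h+(v_{i,j+1/2}-v_{i,j-1/2})/h$; $(\operatorname{G}H)_{ij}=((H_{i+1/2,j}-H_{i-1/2,j})/h,(H_{i,j+1/2}-H_{i,j-1/2})/h)$.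 $\vec J^h_{ij}=(\tilde{\vec x}_{ij}-\vec c)\times(\operatorname{G}H)_{ij}$ (planar scalar cross product $a_1b_2-a_2b_1$), $\vec c\in\mathbb{R}^2$ fixed, $\tilde{\vec x}_{ij}=\frac12(\vec x+\vec y)$ if $\partial C_{ij}\cap\partial\Omega=\{\vec x,\vec y\}$ and $0$ if empty. Constants $\rho,m>0$, inertia $\mathbb{I}>0$. $(L^hp)_{ij}=-(\operatorname{D}(\frac H\rho\operatorname{G}p))_{ij}+(\operatorname{G}H)_{ij}\cdot\frac1m\sum_{k,l}p_{kl}(\operatorname{G}H)_{kl}h^2+\vec J^h_{ij}\mathbb{I}^{-1}\sum_{k,l}p_{kl}\vec J^h_{kl}h^2$ for $p:\Omega^h\to\mathbb{R}$ (sums over $\Omega^h$). *)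

theory Defs
  imports "HOL-Analysis.Analysis"
begin

text \<open>Points of the plane are pairs of reals; grid indices are pairs of integers.
  Edge values u_{i+1/2,j} are stored at index (i,j), v_{i,j+1/2} at index (i,j).\<close>

definition cell :: "real \<Rightarrow> int \<Rightarrow> int \<Rightarrow> (real \<times> real) set" where
  "cell h i j = {(real_of_int i - 1/2) * h .. (real_of_int i + 1/2) * h}
              \<times> {(real_of_int j - 1/2) * h .. (real_of_int j + 1/2) * h}"

definition OmegaH :: "(real \<times> real) set \<Rightarrow> real \<Rightarrow> (int \<times> int) set" where
  "OmegaH \<Omega> h = {(i, j). cell h i j \<inter> \<Omega> \<noteq> {}}"

definition Hx :: "(real \<times> real) set \<Rightarrow> real \<Rightarrow> int \<Rightarrow> int \<Rightarrow> real" where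
  "Hx \<Omega> h i j = measure lebesgue
      {t \<in> {(real_of_int j - 1/2) * h .. (real_of_int j + 1/2) * h}.
         ((real_of_int i + 1/2) * h, t) \<in> \<Omega>} / h"

definition Hy :: "(real \<times> real) set \<Rightarrow> real \<Rightarrow> int \<Rightarrow> int \<Rightarrow> real" where
  "Hy \<Omega> h i j = measure lebesgue
      {t \<in> {(real_of_int i - 1/2) * h .. (real_of_int i + 1/2) * h}.
         (t, (real_of_int j + 1/2) * h) \<in> \<Omega>} / h"

definition GH :: "(real \<times> real) set \<Rightarrow> real \<Rightarrow> int \<times> int \<Rightarrow> real \<times> real" where
  "GH \<Omega> h k = (case k of (i, j) \<Rightarrow>
      ((Hx \<Omega> h i j - Hx \<Omega> h (i - 1) j) / h, (Hy \<Omega> h i j - Hy \<Omega> h i (j - 1)) / h))"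

definition cross2 :: "real \<times> real \<Rightarrow> real \<times> real \<Rightarrow> real" where
  "cross2 a b = fst a * snd b - snd a * fst b"

definition dot2 :: "real \<times> real \<Rightarrow> real \<times> real \<Rightarrow> real" where
  "dot2 a b = fst a * fst b + snd a * snd b"

definition xtilde :: "(real \<times> real) set \<Rightarrow> real \<Rightarrow> int \<times> int \<Rightarrow> real \<times> real" where
  "xtilde \<Omega> h k = (case k of (i, j) \<Rightarrow>
      (let S = frontier (cell h i j) \<inter> frontier \<Omega> in
       if \<exists>x y. S = {x, y}
       then (case (SOME (x, y). S = {x, y}) of (x, y) \<Rightarrow> (1/2) *\<^sub>R (x + y))
       else 0))"

definition Jh :: "(real \<times> real) set \<Rightarrow> real \<Rightarrow> real \<times> real \<Rightarrow> int \<times> int \<Rightarrow> real" where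
  "Jh \<Omega> h c k = cross2 (xtilde \<Omega> h k - c) (GH \<Omega> h k)"

definition Gx :: "real \<Rightarrow> (int \<times> int \<Rightarrow> real) \<Rightarrow> int \<Rightarrow> int \<Rightarrow> real" where
  "Gx h p i j = (p (i + 1, j) - p (i, j)) / h"

definition Gy :: "real \<Rightarrow> (int \<times> int \<Rightarrow> real) \<Rightarrow> int \<Rightarrow> int \<Rightarrow> real" where
  "Gy h p i j = (p (i, j + 1) - p (i, j)) / h"

definition Dh :: "real \<Rightarrow> (int \<Rightarrow> int \<Rightarrow> real) \<Rightarrow> (int \<Rightarrow> int \<Rightarrow> real) \<Rightarrow> int \<times> int \<Rightarrow> real" where
  "Dh h u v k = (case k of (i, j) \<Rightarrow>
      (u i j - u (i - 1) j) / h + (v i j - v i (j - 1)) / h)"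

text \<open>The operator L^h acting on p : \<Omega>^h \<rightarrow> \<real>; p is extended by zero outside \<Omega>^h
  (values there never matter, since H vanishes on edges leaving \<Omega>^h).\<close>
definition Lh :: "(real \<times> real) set \<Rightarrow> real \<Rightarrow> real \<Rightarrow> real \<Rightarrow> real \<Rightarrow> real \<times> real
                   \<Rightarrow> (int \<times> int \<Rightarrow> real) \<Rightarrow> int \<times> int \<Rightarrow> real" where
  "Lh \<Omega> h \<rho> m II c p k =
     (let q = (\<lambda>l. if l \<in> OmegaH \<Omega> h then p l else 0) in
        - Dh h (\<lambda>i j. Hx \<Omega> h i j / \<rho> * Gx h q i j) (\<lambda>i j. Hy \<Omega> h i j / \<rho> * Gy h q i j) k
        + dot2 (GH \<Omega> h k) ((1 / m) *\<^sub>R (\<Sum>l\<in>OmegaH \<Omega> h. (q l * h^2) *\<^sub>R GH \<Omega> h l))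
        + Jh \<Omega> h c k * (1 / II) * (\<Sum>l\<in>OmegaH \<Omega> h. q l * Jh \<Omega> h c l * h^2))"

end

theory Submission
  imports Defs
begin


lemma const_piece:
  fixes \<gamma> :: "real \<Rightarrow> real \<times> real"
  assumes cont: "\<And>x. continuous (at x) \<gamma>" and op: "open \<Omega>"
    and B: "\<And>s. s \<in> {u<..<w} \<Longrightarrow> \<gamma> s \<in> B"
    and noS: "\<And>s. s \<in> {u<..<w} \<Longrightarrow> \<gamma> s \<notin> B \<inter> frontier \<Omega>"
  shows "\<exists>c. \<forall>s\<in>{u<..<w}. (\<gamma> s \<in> \<Omega>) = c"
proof -
  have cn: "connected {u<..<w}" by simp
  have o1: "open (\<gamma> -` \<Omega>)" using continuous_open_vimage op cont by blast
  have o2: "open (\<gamma> -` (- closure \<Omega>))" using continuous_open_vimage cont by blast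
  have d: "\<gamma> -` \<Omega> \<inter> \<gamma> -` (- closure \<Omega>) \<inter> {u<..<w} = {}" using closure_subset[of \<Omega>] by auto
  have c: "{u<..<w} \<subseteq> \<gamma> -` \<Omega> \<union> \<gamma> -` (- closure \<Omega>)"
  proof
    fix s assume s: "s \<in> {u<..<w}"
    have "\<gamma> s \<notin> frontier \<Omega>" using B[OF s] noS[OF s] by auto
    then show "s \<in> \<gamma> -` \<Omega> \<union> \<gamma> -` (- closure \<Omega>)" using op by (auto simp: frontier_def interior_open)
  qed
  from connectedD[OF cn o1 o2 d c] have "\<gamma> -` \<Omega> \<inter> {u<..<w} = {} \<or> \<gamma> -` (- closure \<Omega>) \<inter> {u<..<w} = {}" .
  then show ?thesis
  proof
    assume "\<gamma> -` \<Omega> \<inter> {u<..<w} = {}" then show ?thesis by (intro exI[of _ False]) auto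
  next
    assume "\<gamma> -` (- closure \<Omega>) \<inter> {u<..<w} = {}" then show ?thesis using c by (intro exI[of _ True]) auto
  qed
qed

lemma wrap_status:
  fixes \<gamma> :: "real \<Rightarrow> real \<times> real"
  assumes cont: "\<And>x. continuous (at x) \<gamma>" and op: "open \<Omega>"
    and nf: "\<gamma> t \<notin> frontier \<Omega>"
    and near: "\<And>e. e > 0 \<Longrightarrow> \<exists>s\<in>J. dist s t < e"
    and st: "\<forall>s\<in>J. (\<gamma> s \<in> \<Omega>) = c"
  shows "c = (\<gamma> t \<in> \<Omega>)"
proof (cases "\<gamma> t \<in> \<Omega>")
  case True
  have "open (\<gamma> -` \<Omega>)" using continuous_open_vimage op cont by blast
  then obtain e where "e > 0" "ball t e \<subseteq> \<gamma> -` \<Omega>" using True by (meson open_contains_ball_eq vimageI2)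
  then obtain s where "s \<in> J" "dist s t < e" using near by blast
  then have "\<gamma> s \<in> \<Omega>" using \<open>ball t e \<subseteq> _\<close> by (auto simp: dist_commute subset_iff)
  then show ?thesis using st \<open>s \<in> J\<close> True by auto
next
  case False
  then have nc: "\<gamma> t \<notin> closure \<Omega>" using nf op by (auto simp: frontier_def interior_open)
  have "open (\<gamma> -` (- closure \<Omega>))" using continuous_open_vimage cont by blast
  then obtain e where "e > 0" "ball t e \<subseteq> \<gamma> -` (- closure \<Omega>)" using nc
    by (meson ComplI open_contains_ball_eq vimageI2)
  then obtain s where "s \<in> J" "dist s t < e" using near by blast
  then have "\<gamma> s \<notin> closure \<Omega>" using \<open>ball t e \<subseteq> _\<close> by (auto simp: dist_commute subset_iff)
  then have "\<gamma> s \<notin> \<Omega>" using closure_subset[of \<Omega>] by blast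
  then show ?thesis using st \<open>s \<in> J\<close> False by auto
qed

lemma near_right: "(t::real) < w \<Longrightarrow> e > 0 \<Longrightarrow> \<exists>s\<in>{t<..<w}. dist s t < (e::real)"
  by (rule bexI[of _ "t + min e (w - t) / 2"]) (auto simp: dist_real_def min_def field_simps)

lemma near_left: "(u::real) < t \<Longrightarrow> e > 0 \<Longrightarrow> \<exists>s\<in>{u<..<t}. dist s t < (e::real)"
  by (rule bexI[of _ "t - min e (t - u) / 2"]) (auto simp: dist_real_def min_def field_simps)

lemma piece_integral:
  fixes g :: "real \<Rightarrow> real"
  assumes "(g has_integral I) {u..w}"
    and "\<forall>s\<in>{u<..<w}. (\<gamma> s \<in> \<Omega>) = c"
  shows "((\<lambda>s. indicator {s. \<gamma> s \<in> \<Omega>} s * g s) has_integral (of_bool c * I)) {u..w}"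
proof -
  have h: "((\<lambda>s. of_bool c * g s) has_integral (of_bool c * I)) {u..w}"
    using assms(1) by (rule has_integral_mult_right)
  show ?thesis
    by (rule has_integral_spike_finite[where S="{u,w}", OF _ _ h]) (use assms(2) in \<open>auto simp: indicator_def\<close>)
qed

lemma three_in_two: "S = {x,y} \<Longrightarrow> a \<in> S \<Longrightarrow> b \<in> S \<Longrightarrow> c \<in> S \<Longrightarrow> a \<noteq> b \<Longrightarrow> a \<noteq> c \<Longrightarrow> b \<noteq> c \<Longrightarrow> False"
  by auto

lemma two_in_two: "S = {x,y} \<Longrightarrow> a \<in> S \<Longrightarrow> b \<in> S \<Longrightarrow> a \<noteq> b \<Longrightarrow> S = {a,b}"
  by auto

lemma T_cases:
  fixes T :: "real set"
  assumes "finite T" "card T \<le> 2"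
  shows "T = {} \<or> (\<exists>t. T = {t}) \<or> (\<exists>t1 t2. t1 < t2 \<and> T = {t1,t2})"
proof -
  consider "card T = 0" | "card T = 1" | "card T = 2" using assms(2) by linarith
  then show ?thesis
  proof cases
    case 1 then show ?thesis using assms(1) by simp
  next
    case 2 then obtain x where "T = {x}" by (auto simp: card_Suc_eq)
    then show ?thesis by blast
  next
    case 3
    then obtain x y where "T = {x,y}" "x \<noteq> y" by (auto simp: card_2_iff)
    then show ?thesis by (metis insert_commute linorder_neq_iff)
  qed
qed

lemma loop_structure:
  fixes \<gamma> :: "real \<Rightarrow> real \<times> real" and L :: real
  assumes L: "L > 0" and cont: "\<And>x. continuous (at x) \<gamma>" and op: "open \<Omega>"
    and per: "\<gamma> 0 = \<gamma> L" and inj: "inj_on \<gamma> {0..<L}"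
    and B: "\<And>s. s \<in> {0..L} \<Longrightarrow> \<gamma> s \<in> B"
    and S2: "B \<inter> frontier \<Omega> = {} \<or> (\<exists>x y. B \<inter> frontier \<Omega> = {x, y})"
  shows "\<exists>\<kappa> ta tb. ta \<in> {0..L} \<and> tb \<in> {0..L} \<and> (\<kappa> = 0 \<or> B \<inter> frontier \<Omega> = {\<gamma> ta, \<gamma> tb}) \<and>
     (\<forall>g G. (\<forall>u w. 0 \<le> u \<longrightarrow> u \<le> w \<longrightarrow> w \<le> L \<longrightarrow> ((g::real\<Rightarrow>real) has_integral (G w - G u)) {u..w}) \<longrightarrow> G 0 = G L \<longrightarrow>
        ((\<lambda>s. indicator {s. \<gamma> s \<in> \<Omega>} s * g s) has_integral (\<kappa> * (G tb - G ta))) {0..L})"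
proof -
  define S where "S = B \<inter> frontier \<Omega>"
  define T where "T = {s\<in>{0<..<L}. \<gamma> s \<in> S}"
  have fS: "finite S" and cS: "card S \<le> 2" using S2 unfolding S_def by (auto simp: card_insert_if)
  have injT: "inj_on \<gamma> T" using inj by (rule inj_on_subset) (auto simp: T_def)
  have imT: "\<gamma> ` T \<subseteq> S" by (auto simp: T_def)
  have fT: "finite T" using finite_subset[OF imT fS] injT finite_imageD by blast
  have cT: "card T \<le> 2" using card_inj_on_le[OF injT imT fS] cS by linarith
  have piece: "\<exists>c. \<forall>s\<in>{u<..<w}. (\<gamma> s \<in> \<Omega>) = c" if "0 \<le> u" "w \<le> L" "\<forall>s\<in>{u<..<w}. s \<notin> T" for u w
    by (rule const_piece[OF cont op, of u w B]) (use that B in \<open>auto simp: T_def S_def\<close>)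
  have wl: "c = (\<gamma> 0 \<in> \<Omega>)" if "\<gamma> 0 \<notin> S" "0 < w" "\<forall>s\<in>{0<..<w}. (\<gamma> s \<in> \<Omega>) = c" for w c
    by (rule wrap_status[OF cont op _ near_right[OF that(2)] that(3)]) (use that B[of 0] L in \<open>auto simp: S_def\<close>)
  have wr: "c = (\<gamma> 0 \<in> \<Omega>)" if "\<gamma> 0 \<notin> S" "u < L" "\<forall>s\<in>{u<..<L}. (\<gamma> s \<in> \<Omega>) = c" for u c
  proof -
    have "c = (\<gamma> L \<in> \<Omega>)"
      by (rule wrap_status[OF cont op _ near_left[OF that(2)] that(3)]) (use that B[of L] L per in \<open>auto simp: S_def\<close>)
    then show ?thesis using per by simp
  qed
  define P where "P = (\<lambda>g G. (\<forall>u w. 0 \<le> u \<longrightarrow> u \<le> w \<longrightarrow> w \<le> L \<longrightarrow> ((g::real\<Rightarrow>real) has_integral (G w - G u)) {u..w}))"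
  have PI: "(g has_integral (G w - G u)) {u..w}" if "P g G" "0 \<le> u" "u \<le> w" "w \<le> L" for g G u w
    using that unfolding P_def by blast
  have main: "\<exists>\<kappa> ta tb. ta \<in> {0..L} \<and> tb \<in> {0..L} \<and> (\<kappa> = 0 \<or> S = {\<gamma> ta, \<gamma> tb}) \<and>
     (\<forall>g G. P g G \<longrightarrow> G 0 = G L \<longrightarrow>
        ((\<lambda>s. indicator {s. \<gamma> s \<in> \<Omega>} s * g s) has_integral (\<kappa> * (G tb - G ta))) {0..L})"
  proof -
    consider "T = {}" | t where "T = {t}" | t1 t2 where "t1 < t2" "T = {t1,t2}"
      using T_cases[OF fT cT] by blast
    then show ?thesis
    proof cases
      case 1
      obtain c where c: "\<forall>s\<in>{0<..<L}. (\<gamma> s \<in> \<Omega>) = c" using piece[of 0 L] 1 by auto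
      show ?thesis
      proof (intro exI[of _ "0::real"] exI[of _ "0::real"] exI[of _ "0::real"] conjI allI impI)
        fix g G assume "P g G" "G 0 = G L"
        have "((\<lambda>s. indicator {s. \<gamma> s \<in> \<Omega>} s * g s) has_integral (of_bool c * (G L - G 0))) {0..L}"
          by (rule piece_integral[OF PI[OF \<open>P g G\<close>] c]) (use L in auto)
        then show "((\<lambda>s. indicator {s. \<gamma> s \<in> \<Omega>} s * g s) has_integral (0 * (G 0 - G 0))) {0..L}"
          using \<open>G 0 = G L\<close> by simp
      qed (use L in auto)
    next
      case 2
      have t: "0 < t" "t < L" "\<gamma> t \<in> S" using 2 by (auto simp: T_def)
      obtain c0 where c0: "\<forall>s\<in>{0<..<t}. (\<gamma> s \<in> \<Omega>) = c0" using piece[of 0 t] 2 t by auto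
      obtain c1 where c1: "\<forall>s\<in>{t<..<L}. (\<gamma> s \<in> \<Omega>) = c1" using piece[of t L] 2 t by auto
      have int: "((\<lambda>s. indicator {s. \<gamma> s \<in> \<Omega>} s * g s) has_integral
          (of_bool c0 * (G t - G 0) + of_bool c1 * (G L - G t))) {0..L}" if "P g G" for g G
      proof -
        have i0: "((\<lambda>s. indicator {s. \<gamma> s \<in> \<Omega>} s * g s) has_integral (of_bool c0 * (G t - G 0))) {0..t}"
          by (rule piece_integral[OF PI[OF that] c0]) (use t in auto)
        have i1: "((\<lambda>s. indicator {s. \<gamma> s \<in> \<Omega>} s * g s) has_integral (of_bool c1 * (G L - G t))) {t..L}"
          by (rule piece_integral[OF PI[OF that] c1]) (use t in auto)
        show ?thesis by (rule has_integral_combine[OF _ _ i0 i1]) (use t in auto)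
      qed
      show ?thesis
      proof (cases "\<gamma> 0 \<in> S")
        case True
        have ne: "\<gamma> 0 \<noteq> \<gamma> t"
        proof
          assume "\<gamma> 0 = \<gamma> t"
          from inj_onD[OF inj this] t show False by simp
        qed
        from S2 obtain x y where "S = {x,y}" using True unfolding S_def by blast
        from two_in_two[OF this True t(3) ne] have SS: "S = {\<gamma> 0, \<gamma> t}" .
        have X: "((\<lambda>s. indicator {s. \<gamma> s \<in> \<Omega>} s * g s) has_integral
              ((of_bool c0 - of_bool c1) * (G t - G 0))) {0..L}" if "P g G" "G 0 = G L" for g G
          using int[OF that(1)] that(2) by (simp add: algebra_simps)
        show ?thesis
          apply (rule exI[of _ "of_bool c0 - of_bool c1 :: real"])
          apply (rule exI[of _ "0::real"])
          apply (rule exI[of _ t])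
          apply (intro conjI)
        subgoal using L t by auto
        subgoal using L t by auto
        subgoal using SS by blast
        subgoal using X by blast
        done
      next
        case False
        have "c0 = (\<gamma> 0 \<in> \<Omega>)" by (rule wl[OF False t(1) c0])
        moreover have "c1 = (\<gamma> 0 \<in> \<Omega>)" by (rule wr[OF False t(2) c1])
        ultimately have cc: "c1 = c0" by simp
        show ?thesis
        proof (intro exI[of _ "0::real"] exI[of _ "0::real"] exI[of _ "0::real"] conjI allI impI)
          fix g G assume "P g G" "G 0 = G L"
          with int[OF this(1)] show "((\<lambda>s. indicator {s. \<gamma> s \<in> \<Omega>} s * g s) has_integral
              (0 * (G 0 - G 0))) {0..L}"
            using cc by (simp add: algebra_simps)
        qed (use L in auto)
      qed
    next
      case 3
      have t: "0 < t1" "t2 < L" "\<gamma> t1 \<in> S" "\<gamma> t2 \<in> S" "t1 < t2" using 3 by (auto simp: T_def)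
      have ne: "\<gamma> 0 \<noteq> \<gamma> t1" "\<gamma> 0 \<noteq> \<gamma> t2" "\<gamma> t1 \<noteq> \<gamma> t2"
      proof -
        show "\<gamma> 0 \<noteq> \<gamma> t1"
        proof
          assume "\<gamma> 0 = \<gamma> t1"
          from inj_onD[OF inj this] t show False by simp
        qed
        show "\<gamma> 0 \<noteq> \<gamma> t2"
        proof
          assume "\<gamma> 0 = \<gamma> t2"
          from inj_onD[OF inj this] t show False by simp
        qed
        show "\<gamma> t1 \<noteq> \<gamma> t2"
        proof
          assume "\<gamma> t1 = \<gamma> t2"
          from inj_onD[OF inj this] t show False by simp
        qed
      qed
      from S2 obtain x y where xy: "S = {x,y}" using t(3) unfolding S_def by blast
      have nS: "\<gamma> 0 \<notin> S"
      proof
        assume "\<gamma> 0 \<in> S"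
        from three_in_two[OF xy this t(3,4) ne] show False .
      qed
      from two_in_two[OF xy t(3,4) ne(3)] have SS: "S = {\<gamma> t1, \<gamma> t2}" .
      obtain c0 where c0: "\<forall>s\<in>{0<..<t1}. (\<gamma> s \<in> \<Omega>) = c0" using piece[of 0 t1] 3 t by auto
      obtain c1 where c1: "\<forall>s\<in>{t1<..<t2}. (\<gamma> s \<in> \<Omega>) = c1" using piece[of t1 t2] 3 t by auto
      obtain c2 where c2: "\<forall>s\<in>{t2<..<L}. (\<gamma> s \<in> \<Omega>) = c2" using piece[of t2 L] 3 t by auto
      have "c0 = (\<gamma> 0 \<in> \<Omega>)" by (rule wl[OF nS t(1) c0])
      moreover have "c2 = (\<gamma> 0 \<in> \<Omega>)" by (rule wr[OF nS t(2) c2])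
      ultimately have cc: "c2 = c0" by simp
      have int: "((\<lambda>s. indicator {s. \<gamma> s \<in> \<Omega>} s * g s) has_integral
          (of_bool c0 * (G t1 - G 0) + (of_bool c1 * (G t2 - G t1) + of_bool c2 * (G L - G t2)))) {0..L}" if "P g G" for g G
      proof -
        have i0: "((\<lambda>s. indicator {s. \<gamma> s \<in> \<Omega>} s * g s) has_integral (of_bool c0 * (G t1 - G 0))) {0..t1}"
          by (rule piece_integral[OF PI[OF that] c0]) (use t in auto)
        have i1: "((\<lambda>s. indicator {s. \<gamma> s \<in> \<Omega>} s * g s) has_integral (of_bool c1 * (G t2 - G t1))) {t1..t2}"
          by (rule piece_integral[OF PI[OF that] c1]) (use t in auto)
        have i2: "((\<lambda>s. indicator {s. \<gamma> s \<in> \<Omega>} s * g s) has_integral (of_bool c2 * (G L - G t2))) {t2..L}"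
          by (rule piece_integral[OF PI[OF that] c2]) (use t in auto)
        have i12: "((\<lambda>s. indicator {s. \<gamma> s \<in> \<Omega>} s * g s) has_integral (of_bool c1 * (G t2 - G t1) + of_bool c2 * (G L - G t2))) {t1..L}"
          by (rule has_integral_combine[OF _ _ i1 i2]) (use t in auto)
        show ?thesis by (rule has_integral_combine[OF _ _ i0 i12]) (use t in auto)
      qed
      have X: "((\<lambda>s. indicator {s. \<gamma> s \<in> \<Omega>} s * g s) has_integral
            ((of_bool c1 - of_bool c0) * (G t2 - G t1))) {0..L}" if "P g G" "G 0 = G L" for g G
        using int[OF that(1)] that(2) cc by (simp add: algebra_simps)
      show ?thesis
        apply (rule exI[of _ "of_bool c1 - of_bool c0 :: real"])
        apply (rule exI[of _ t1])
        apply (rule exI[of _ t2])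
        apply (intro conjI)
        subgoal using L t by auto
        subgoal using L t by auto
        subgoal using SS by blast
        subgoal using X by blast
        done
    qed
  qed
  then show ?thesis unfolding S_def P_def .
qed



definition cl :: "real \<Rightarrow> real \<Rightarrow> real" where "cl h x = max 0 (min h x)"
definition dcl :: "real \<Rightarrow> real \<Rightarrow> real" where "dcl h x = (if 0 < x \<and> x < h then 1 else 0)"

lemma cl_shift_deriv:
  assumes h: "0 < h" and "x - c \<noteq> 0" "x - c \<noteq> h"
  shows "((\<lambda>s. cl h (s - c)) has_real_derivative dcl h (x - c)) (at x)"
proof -
  consider "x - c < 0" | "0 < x - c \<and> x - c < h" | "h < x - c" using assms by linarith
  then show ?thesis
  proof cases
    case 1
    have e: "dcl h (x - c) = 0" using 1 by (simp add: dcl_def)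
    have d: "((\<lambda>s. 0) has_real_derivative 0) (at x)" by simp
    show ?thesis unfolding e
      by (rule has_field_derivative_transform_within_open[OF d, of "{..<c}"])
         (use 1 h in \<open>auto simp: cl_def\<close>)
  next
    case 2
    have e: "dcl h (x - c) = 1" using 2 by (simp add: dcl_def)
    have d: "((\<lambda>s. s - c) has_real_derivative 1) (at x)" by (auto intro!: derivative_eq_intros)
    show ?thesis unfolding e
      by (rule has_field_derivative_transform_within_open[OF d, of "{c<..<c+h}"])
         (use 2 h in \<open>auto simp: cl_def\<close>)
  next
    case 3
    have e: "dcl h (x - c) = 0" using 3 h by (simp add: dcl_def)
    have d: "((\<lambda>s. h) has_real_derivative 0) (at x)" by simp
    show ?thesis unfolding e
      by (rule has_field_derivative_transform_within_open[OF d, of "{c+h<..}"])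
         (use 3 h in \<open>auto simp: cl_def\<close>)
  qed
qed

lemma cl_cont: "continuous (at x) (\<lambda>s. cl h (s - c))"
  unfolding cl_def by (intro continuous_intros)

lemma seg_fwd:
  fixes g f :: "real \<Rightarrow> real"
  assumes "(g has_integral I) {u..w}" and "\<forall>s\<in>{u<..<w}. g s = f (s + c)"
  shows "(f has_integral I) {u+c..w+c}"
proof -
  have "((f \<circ> (+) c) has_integral I) {u..w}"
    by (rule has_integral_spike_finite[where S="{u,w}", OF _ _ assms(1)]) (use assms(2) in \<open>auto simp: add.commute\<close>)
  then show ?thesis by (simp add: has_integral_shift_Icc_real)
qed

lemma seg_rev:
  fixes g f :: "real \<Rightarrow> real"
  assumes "(g has_integral I) {u..w}" and "\<forall>s\<in>{u<..<w}. g s = f (c - s)"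
  shows "(f has_integral I) {c-w..c-u}"
proof -
  have X: "((\<lambda>s. (f \<circ> (+) c) (- s)) has_integral I) {u..w}"
    by (rule has_integral_spike_finite[where S="{u,w}", OF _ _ assms(1)]) (use assms(2) in \<open>auto\<close>)
  have "((f \<circ> (+) c) has_integral I) {-w..-u}"
    using has_integral_reflect_real[of "f \<circ> (+) c" I "-u" "-w"] X by simp
  then show ?thesis by (simp add: has_integral_shift_Icc_real)
qed

definition g1 :: "real \<Rightarrow> real \<Rightarrow> real \<Rightarrow> real" where "g1 a1 h s = a1 + cl h (s - 0) - cl h (s - 2*h)"
definition g2 :: "real \<Rightarrow> real \<Rightarrow> real \<Rightarrow> real" where "g2 a2 h s = a2 + cl h (s - h) - cl h (s - 3*h)"
definition d1 :: "real \<Rightarrow> real \<Rightarrow> real" where "d1 h s = dcl h (s - 0) - dcl h (s - 2*h)"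
definition d2 :: "real \<Rightarrow> real \<Rightarrow> real" where "d2 h s = dcl h (s - h) - dcl h (s - 3*h)"
definition gam :: "real \<Rightarrow> real \<Rightarrow> real \<Rightarrow> real \<Rightarrow> real \<times> real" where "gam a1 a2 h s = (g1 a1 h s, g2 a2 h s)"
definition QQ :: "real \<Rightarrow> real \<Rightarrow> real \<Rightarrow> real \<Rightarrow> real" where "QQ a1 a2 h s = ((g1 a1 h s)^2 + (g2 a2 h s)^2) / 2"
definition gd :: "real \<Rightarrow> real \<Rightarrow> real \<Rightarrow> real \<Rightarrow> real" where "gd a1 a2 h s = g1 a1 h s * d1 h s + g2 a2 h s * d2 h s"

lemma g1_deriv: "0 < h \<Longrightarrow> s \<notin> {0,h,2*h,3*h,4*h} \<Longrightarrow> (g1 a1 h has_real_derivative d1 h s) (at s)"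
  unfolding g1_def[abs_def] d1_def
  by (rule derivative_eq_intros cl_shift_deriv | simp)+

lemma g2_deriv: "0 < h \<Longrightarrow> s \<notin> {0,h,2*h,3*h,4*h} \<Longrightarrow> (g2 a2 h has_real_derivative d2 h s) (at s)"
  unfolding g2_def[abs_def] d2_def
  by (rule derivative_eq_intros cl_shift_deriv | simp)+

lemma g1_cont: "continuous (at x) (g1 a1 h)"
  unfolding g1_def[abs_def] by (intro continuous_intros cl_cont)

lemma g2_cont: "continuous (at x) (g2 a2 h)"
  unfolding g2_def[abs_def] by (intro continuous_intros cl_cont)

lemma QQ_deriv: "0 < h \<Longrightarrow> s \<notin> {0,h,2*h,3*h,4*h} \<Longrightarrow> (QQ a1 a2 h has_real_derivative gd a1 a2 h s) (at s)"
proof -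
  assume a: "0 < h" "s \<notin> {0,h,2*h,3*h,4*h}"
  have "((\<lambda>s. ((g1 a1 h s)^2 + (g2 a2 h s)^2) / 2) has_real_derivative
      (2 * g1 a1 h s * d1 h s + 2 * g2 a2 h s * d2 h s) / 2) (at s)"
  proof -
    have d1': "(g1 a1 h has_real_derivative d1 h s) (at s)" by (rule g1_deriv[OF a])
    have d2': "(g2 a2 h has_real_derivative d2 h s) (at s)" by (rule g2_deriv[OF a])
    have p: "((\<lambda>s. ((g1 a1 h s)^2 + (g2 a2 h s)^2) / 2) has_real_derivative
       (of_nat 2 * (d1 h s * g1 a1 h s ^ (2 - Suc 0)) + of_nat 2 * (d2 h s * g2 a2 h s ^ (2 - Suc 0))) / 2) (at s)"
      by (rule DERIV_cdivide[OF DERIV_add[OF DERIV_power[OF d1'] DERIV_power[OF d2']]])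
    show ?thesis using p by (simp add: algebra_simps)
  qed
  moreover have "(2 * g1 a1 h s * d1 h s + 2 * g2 a2 h s * d2 h s) / 2 = gd a1 a2 h s"
    unfolding gd_def by simp
  ultimately show ?thesis unfolding QQ_def[abs_def] by simp
qed

lemma QQ_cont: "continuous (at x) (QQ a1 a2 h)"
  unfolding QQ_def[abs_def] by (intro continuous_intros g1_cont g2_cont) simp

lemma ftc_pw:
  fixes F f :: "real \<Rightarrow> real"
  assumes "finite E" "\<And>x. x \<notin> E \<Longrightarrow> (F has_real_derivative f x) (at x)"
    "\<And>x. continuous (at x) F" "u \<le> w"
  shows "(f has_integral (F w - F u)) {u..w}"
proof (rule fundamental_theorem_of_calculus_interior_strong[OF assms(1,4)])
  show "(F has_vector_derivative f x) (at x)" if "x \<in> {u<..<w} - E" for x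
    using assms(2) that by (simp add: has_real_derivative_iff_has_vector_derivative)
  show "continuous_on {u..w} F" using assms(3) by (simp add: continuous_at_imp_continuous_on)
qed

lemma gam_cases:
  assumes "0 < h" "0 \<le> s" "s \<le> 4*h"
  shows "(s \<le> h \<and> gam a1 a2 h s = (a1+s, a2)) \<or> (h \<le> s \<and> s \<le> 2*h \<and> gam a1 a2 h s = (a1+h, a2+s-h)) \<or>
     (2*h \<le> s \<and> s \<le> 3*h \<and> gam a1 a2 h s = (a1+3*h-s, a2+h)) \<or> (3*h \<le> s \<and> gam a1 a2 h s = (a1, a2+4*h-s))"
  using assms
  by (cases "s \<le> h"; cases "s \<le> 2*h"; cases "s \<le> 3*h") (auto simp: gam_def g1_def g2_def cl_def max_def min_def)

lemma gam_inj: assumes "0 < h" shows "inj_on (gam a1 a2 h) {0..<4*h}"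
proof (rule inj_onI)
  fix s t assume s: "s \<in> {0..<4*h}" and t: "t \<in> {0..<4*h}" and e: "gam a1 a2 h s = gam a1 a2 h t"
  from gam_cases[OF assms, of s a1 a2] gam_cases[OF assms, of t a1 a2] s t e
  show "s = t" by auto
qed

lemma gam_0: "0 < h \<Longrightarrow> gam a1 a2 h 0 = gam a1 a2 h (4*h)"
  by (auto simp: gam_def g1_def g2_def cl_def)

lemma frontier_box: "frontier ({a..b} \<times> {c..d}) = {a..b} \<times> {c..d} - {a<..<b} \<times> {c<..<d}" for a b c d :: real
  by (simp add: frontier_def closure_closed closed_Times interior_Times)

lemma gam_frontier:
  assumes "0 < h" "s \<in> {0..4*h}"
  shows "gam a1 a2 h s \<in> frontier ({a1..a1+h} \<times> {a2..a2+h})"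
  using gam_cases[OF assms(1), of s a1 a2] assms unfolding frontier_box by auto

lemma split4:
  fixes f :: "real \<Rightarrow> real"
  assumes "(f has_integral I) {0..4*h}" "0 < h"
  shows "I = integral {0..h} f + integral {h..2*h} f + integral {2*h..3*h} f + integral {3*h..4*h} f"
    "(f has_integral integral {0..h} f) {0..h}" "(f has_integral integral {h..2*h} f) {h..2*h}"
    "(f has_integral integral {2*h..3*h} f) {2*h..3*h}" "(f has_integral integral {3*h..4*h} f) {3*h..4*h}"
proof -
  have i: "f integrable_on {0..4*h}" using assms(1) by blast
  have i1: "f integrable_on {0..h}" by (rule integrable_subinterval_real[OF i]) (use assms in auto)
  have i2: "f integrable_on {h..2*h}" by (rule integrable_subinterval_real[OF i]) (use assms in auto)
  have i3: "f integrable_on {2*h..3*h}" by (rule integrable_subinterval_real[OF i]) (use assms in auto)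
  have i4: "f integrable_on {3*h..4*h}" by (rule integrable_subinterval_real[OF i]) (use assms in auto)
  have i13: "f integrable_on {0..3*h}" by (rule integrable_subinterval_real[OF i]) (use assms in auto)
  have i12: "f integrable_on {0..2*h}" by (rule integrable_subinterval_real[OF i]) (use assms in auto)
  have "integral {0..4*h} f = integral {0..3*h} f + integral {3*h..4*h} f"
    using Henstock_Kurzweil_Integration.integral_combine[where a=0 and c="3*h" and b="4*h" and f=f] i assms by simp
  also have "integral {0..3*h} f = integral {0..2*h} f + integral {2*h..3*h} f"
    using Henstock_Kurzweil_Integration.integral_combine[where a=0 and c="2*h" and b="3*h" and f=f] i13 assms by simp
  also have "integral {0..2*h} f = integral {0..h} f + integral {h..2*h} f"
    using Henstock_Kurzweil_Integration.integral_combine[where a=0 and c="h" and b="2*h" and f=f] i12 assms by simp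
  finally show "I = integral {0..h} f + integral {h..2*h} f + integral {2*h..3*h} f + integral {3*h..4*h} f"
    using integral_unique[OF assms(1)] by simp
  show "(f has_integral integral {0..h} f) {0..h}" "(f has_integral integral {h..2*h} f) {h..2*h}"
    "(f has_integral integral {2*h..3*h} f) {2*h..3*h}" "(f has_integral integral {3*h..4*h} f) {3*h..4*h}"
    using i1 i2 i3 i4 by (auto simp: has_integral_integral)
qed

lemma zero_seg:
  fixes g :: "real \<Rightarrow> real"
  assumes "\<forall>s\<in>{u<..<w}. g s = 0"
  shows "integral {u..w} g = 0"
proof -
  have "(g has_integral 0) {u..w}"
    by (rule has_integral_spike_finite[where S="{u,w}", OF _ _ has_integral_0]) (use assms in auto)
  then show ?thesis by (rule integral_unique)
qed

lemma seg_fwd':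
  fixes g f :: "real \<Rightarrow> real"
  assumes "(g has_integral I) {u..w}" and "\<forall>s\<in>{u<..<w}. g s = f (s + c)" "u + c = a" "w + c = b"
  shows "integral {a..b} f = I"
  using seg_fwd[OF assms(1,2)] assms(3,4) by (simp add: integral_unique)

lemma seg_rev':
  fixes g f :: "real \<Rightarrow> real"
  assumes "(g has_integral I) {u..w}" and "\<forall>s\<in>{u<..<w}. g s = f (c - s)" "c - w = a" "c - u = b"
  shows "integral {a..b} f = I"
  using seg_rev[OF assms(1,2)] assms(3,4) by (simp add: integral_unique)

lemma seg_vals:
  assumes "0 < h"
  shows "s \<in> {0<..<h} \<Longrightarrow> gam a1 a2 h s = (a1+s,a2) \<and> d1 h s = 1 \<and> d2 h s = 0"
    "s \<in> {h<..<2*h} \<Longrightarrow> gam a1 a2 h s = (a1+h,a2+s-h) \<and> d1 h s = 0 \<and> d2 h s = 1"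
    "s \<in> {2*h<..<3*h} \<Longrightarrow> gam a1 a2 h s = (a1+3*h-s,a2+h) \<and> d1 h s = -1 \<and> d2 h s = 0"
    "s \<in> {3*h<..<4*h} \<Longrightarrow> gam a1 a2 h s = (a1,a2+4*h-s) \<and> d1 h s = 0 \<and> d2 h s = -1"
  using assms by (auto simp: gam_def g1_def g2_def d1_def d2_def cl_def dcl_def max_def min_def)

lemma cell_identity:
  fixes \<Omega> :: "(real \<times> real) set" and a1 a2 h :: real and xt :: "real \<times> real"
  assumes h: "0 < h" and op: "open \<Omega>"
    and B: "B = frontier ({a1..a1+h} \<times> {a2..a2+h})"
    and S2: "B \<inter> frontier \<Omega> = {} \<or> (\<exists>x y. B \<inter> frontier \<Omega> = {x,y})"
    and xt: "\<And>x y. B \<inter> frontier \<Omega> = {x,y} \<Longrightarrow> xt = (1/2) *\<^sub>R (x + y)"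
  shows "fst xt * (integral {a1..a1+h} (indicator {x. (x,a2) \<in> \<Omega>}) - integral {a1..a1+h} (indicator {x. (x,a2+h) \<in> \<Omega>}))
       + snd xt * (integral {a2..a2+h} (indicator {y. (a1+h,y) \<in> \<Omega>}) - integral {a2..a2+h} (indicator {y. (a1,y) \<in> \<Omega>}))
     = integral {a1..a1+h} (\<lambda>x. indicator {x. (x,a2) \<in> \<Omega>} x * x)
       + integral {a2..a2+h} (\<lambda>y. indicator {y. (a1+h,y) \<in> \<Omega>} y * y)
       - integral {a1..a1+h} (\<lambda>x. indicator {x. (x,a2+h) \<in> \<Omega>} x * x)
       - integral {a2..a2+h} (\<lambda>y. indicator {y. (a1,y) \<in> \<Omega>} y * y)"
proof -
  define \<gamma> where "\<gamma> = gam a1 a2 h"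
  define F where "F = (\<lambda>s. indicator {s. \<gamma> s \<in> \<Omega>} s :: real)"
  define fB where "fB = (indicator {x. (x,a2) \<in> \<Omega>} :: real \<Rightarrow> real)"
  define fT where "fT = (indicator {x. (x,a2+h) \<in> \<Omega>} :: real \<Rightarrow> real)"
  define fR where "fR = (indicator {y. (a1+h,y) \<in> \<Omega>} :: real \<Rightarrow> real)"
  define fL where "fL = (indicator {y. (a1,y) \<in> \<Omega>} :: real \<Rightarrow> real)"
  have L: "0 < 4*h" using h by simp
  have cont: "\<And>x. continuous (at x) \<gamma>"
    unfolding \<gamma>_def gam_def[abs_def] by (intro continuous_Pair g1_cont g2_cont)
  have per: "\<gamma> 0 = \<gamma> (4*h)" unfolding \<gamma>_def by (rule gam_0[OF h])
  have inj: "inj_on \<gamma> {0..<4*h}" unfolding \<gamma>_def by (rule gam_inj[OF h])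
  have Bm: "\<And>s. s \<in> {0..4*h} \<Longrightarrow> \<gamma> s \<in> B" unfolding \<gamma>_def B by (rule gam_frontier[OF h])
  obtain \<kappa> ta tb where kt: "\<kappa> = 0 \<or> B \<inter> frontier \<Omega> = {\<gamma> ta, \<gamma> tb}"
    and I: "\<And>g G. (\<forall>u w. 0 \<le> u \<longrightarrow> u \<le> w \<longrightarrow> w \<le> 4*h \<longrightarrow> ((g::real\<Rightarrow>real) has_integral (G w - G u)) {u..w}) \<Longrightarrow> G 0 = G (4*h) \<Longrightarrow>
        ((\<lambda>s. indicator {s. \<gamma> s \<in> \<Omega>} s * g s) has_integral (\<kappa> * (G tb - G ta))) {0..4*h}"
    using loop_structure[OF L cont op per inj Bm S2] by blast
  have E: "finite {0,h,2*h,3*h,4*h::real}" by simp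
  have g1per: "g1 a1 h 0 = g1 a1 h (4*h)" and g2per: "g2 a2 h 0 = g2 a2 h (4*h)"
    using gam_0[OF h, of a1 a2] by (auto simp: gam_def)
  have Qper: "QQ a1 a2 h 0 = QQ a1 a2 h (4*h)" by (simp add: QQ_def g1per g2per)
  have I1: "((\<lambda>s. F s * d1 h s) has_integral (\<kappa> * (g1 a1 h tb - g1 a1 h ta))) {0..4*h}"
    unfolding F_def
    by (rule I) (use g1per in \<open>auto intro!: ftc_pw[OF E] g1_deriv[OF h] g1_cont\<close>)
  have I2: "((\<lambda>s. F s * d2 h s) has_integral (\<kappa> * (g2 a2 h tb - g2 a2 h ta))) {0..4*h}"
    unfolding F_def
    by (rule I) (use g2per in \<open>auto intro!: ftc_pw[OF E] g2_deriv[OF h] g2_cont\<close>)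
  have I3: "((\<lambda>s. F s * gd a1 a2 h s) has_integral (\<kappa> * (QQ a1 a2 h tb - QQ a1 a2 h ta))) {0..4*h}"
    unfolding F_def
    by (rule I) (use Qper in \<open>auto intro!: ftc_pw[OF E] QQ_deriv[OF h] QQ_cont\<close>)
  note sv = seg_vals[OF h, of _ a1 a2]
  note S1 = split4[OF I1 h]
  have A1: "integral {a1..a1+h} fB = integral {0..h} (\<lambda>s. F s * d1 h s)"
    by (rule seg_fwd'[OF S1(2), where c=a1]) (use sv(1) in \<open>auto simp: F_def fB_def \<gamma>_def indicator_def add.commute\<close>)
  have A2: "integral {h..2*h} (\<lambda>s. F s * d1 h s) = 0"
    by (rule zero_seg) (use sv(2) in auto)
  have A3: "integral {a1..a1+h} (\<lambda>x. - fT x) = integral {2*h..3*h} (\<lambda>s. F s * d1 h s)"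
    by (rule seg_rev'[OF S1(4), where c="a1+3*h"]) (use sv(3) in \<open>auto simp: F_def fT_def \<gamma>_def indicator_def\<close>)
  have A4: "integral {3*h..4*h} (\<lambda>s. F s * d1 h s) = 0"
    by (rule zero_seg) (use sv(4) in auto)
  have V1: "\<kappa> * (g1 a1 h tb - g1 a1 h ta) = integral {a1..a1+h} fB - integral {a1..a1+h} fT"
    using S1(1) A1 A2 A3 A4 by (simp add: integral_neg)
  note S2' = split4[OF I2 h]
  have B1: "integral {0..h} (\<lambda>s. F s * d2 h s) = 0"
    by (rule zero_seg) (use sv(1) in auto)
  have B2: "integral {a2..a2+h} fR = integral {h..2*h} (\<lambda>s. F s * d2 h s)"
    by (rule seg_fwd'[OF S2'(3), where c="a2-h"]) (use sv(2) in \<open>auto simp: F_def fR_def \<gamma>_def indicator_def algebra_simps\<close>)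
  have B3: "integral {2*h..3*h} (\<lambda>s. F s * d2 h s) = 0"
    by (rule zero_seg) (use sv(3) in auto)
  have B4: "integral {a2..a2+h} (\<lambda>x. - fL x) = integral {3*h..4*h} (\<lambda>s. F s * d2 h s)"
    by (rule seg_rev'[OF S2'(5), where c="a2+4*h"]) (use sv(4) in \<open>auto simp: F_def fL_def \<gamma>_def indicator_def\<close>)
  have V2: "\<kappa> * (g2 a2 h tb - g2 a2 h ta) = integral {a2..a2+h} fR - integral {a2..a2+h} fL"
    using S2'(1) B1 B2 B3 B4 by (simp add: integral_neg)
  note S3 = split4[OF I3 h]
  have C1: "integral {a1..a1+h} (\<lambda>x. fB x * x) = integral {0..h} (\<lambda>s. F s * gd a1 a2 h s)"
    by (rule seg_fwd'[OF S3(2), where c=a1]) (use sv(1) in \<open>auto simp: F_def fB_def \<gamma>_def indicator_def gd_def gam_def add.commute\<close>)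
  have C2: "integral {a2..a2+h} (\<lambda>x. fR x * x) = integral {h..2*h} (\<lambda>s. F s * gd a1 a2 h s)"
  proof (rule seg_fwd'[OF S3(3), where c="a2-h"])
    show "\<forall>s\<in>{h<..<2*h}. F s * gd a1 a2 h s = fR (s + (a2-h)) * (s + (a2 - h))"
    proof
      fix s assume s: "s \<in> {h<..<2*h}"
      have e: "g1 a1 h s = a1 + h" "g2 a2 h s = s + (a2 - h)" "d1 h s = 0" "d2 h s = 1"
        using sv(2)[OF s] by (auto simp: gam_def)
      show "F s * gd a1 a2 h s = fR (s + (a2-h)) * (s + (a2 - h))"
        using e by (simp add: F_def fR_def \<gamma>_def gd_def gam_def indicator_def)
    qed
  qed auto
  have C3: "integral {a1..a1+h} (\<lambda>x. - (fT x * x)) = integral {2*h..3*h} (\<lambda>s. F s * gd a1 a2 h s)"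
    by (rule seg_rev'[OF S3(4), where c="a1+3*h"]) (use sv(3) in \<open>auto simp: F_def fT_def \<gamma>_def indicator_def gd_def gam_def\<close>)
  have C4: "integral {a2..a2+h} (\<lambda>x. - (fL x * x)) = integral {3*h..4*h} (\<lambda>s. F s * gd a1 a2 h s)"
    by (rule seg_rev'[OF S3(5), where c="a2+4*h"]) (use sv(4) in \<open>auto simp: F_def fL_def \<gamma>_def indicator_def gd_def gam_def\<close>)
  have V3: "\<kappa> * (QQ a1 a2 h tb - QQ a1 a2 h ta) = integral {a1..a1+h} (\<lambda>x. fB x * x) + integral {a2..a2+h} (\<lambda>x. fR x * x)
      - integral {a1..a1+h} (\<lambda>x. fT x * x) - integral {a2..a2+h} (\<lambda>x. fL x * x)"
    using S3(1) C1 C2 C3 C4 by (simp add: integral_neg)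
  have key: "fst xt * (\<kappa> * (g1 a1 h tb - g1 a1 h ta)) + snd xt * (\<kappa> * (g2 a2 h tb - g2 a2 h ta))
      = \<kappa> * (QQ a1 a2 h tb - QQ a1 a2 h ta)"
  proof (cases "\<kappa> = 0")
    case True then show ?thesis by simp
  next
    case False
    then have "B \<inter> frontier \<Omega> = {\<gamma> ta, \<gamma> tb}" using kt by simp
    then have "xt = (1/2) *\<^sub>R (\<gamma> ta + \<gamma> tb)" by (rule xt)
    then show ?thesis by (simp add: \<gamma>_def gam_def QQ_def algebra_simps power2_eq_square)
  qed
  show ?thesis using key V1 V2 V3 unfolding fB_def fT_def fR_def fL_def by simp
qed



definition MV :: "(real \<times> real) set \<Rightarrow> real \<Rightarrow> int \<Rightarrow> int \<Rightarrow> real" where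
  "MV \<Omega> h i j = integral {(real_of_int j - 1/2) * h .. (real_of_int j + 1/2) * h}
      (\<lambda>t. indicator {t. ((real_of_int i + 1/2) * h, t) \<in> \<Omega>} t * t)"
definition MH :: "(real \<times> real) set \<Rightarrow> real \<Rightarrow> int \<Rightarrow> int \<Rightarrow> real" where
  "MH \<Omega> h i j = integral {(real_of_int i - 1/2) * h .. (real_of_int i + 1/2) * h}
      (\<lambda>t. indicator {t. (t, (real_of_int j + 1/2) * h) \<in> \<Omega>} t * t)"

lemma open_slice_x: "open \<Omega> \<Longrightarrow> open {t. (X::real, t::real) \<in> \<Omega>}"
  using continuous_open_vimage[of \<Omega> "\<lambda>t. (X, t)"] by (auto intro: continuous_intros simp: vimage_def)

lemma open_slice_y: "open \<Omega> \<Longrightarrow> open {t. (t::real, Y::real) \<in> \<Omega>}"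
  using continuous_open_vimage[of \<Omega> "\<lambda>t. (t, Y)"] by (auto intro: continuous_intros simp: vimage_def)

lemma lmeas_open_Icc: "open (S::real set) \<Longrightarrow> S \<inter> {a..b} \<in> lmeasurable"
proof (rule bounded_set_imp_lmeasurable)
  assume "open S"
  show "bounded (S \<inter> {a..b})" by (simp add: bounded_Int)
  have "S \<in> sets lebesgue" using lebesgue_openin[of UNIV S] \<open>open S\<close> by simp
  moreover have "{a..b} \<in> sets lebesgue" by simp
  ultimately show "S \<inter> {a..b} \<in> sets lebesgue" by blast
qed

lemma meas_int_x:
  fixes \<Omega> :: "(real \<times> real) set"
  assumes "open \<Omega>"
  shows "measure lebesgue {t \<in> {a..b}. (X, t) \<in> \<Omega>} = integral {a..b} (indicator {t. (X, t) \<in> \<Omega>})"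
proof -
  have e: "{t \<in> {a..b}. (X, t) \<in> \<Omega>} = {t. (X, t) \<in> \<Omega>} \<inter> {a..b}" by auto
  show ?thesis unfolding e
    by (rule integral_indicator[symmetric]) (rule lmeas_open_Icc[OF open_slice_x[OF assms]])
qed

lemma meas_int_y:
  fixes \<Omega> :: "(real \<times> real) set"
  assumes "open \<Omega>"
  shows "measure lebesgue {t \<in> {a..b}. (t, Y) \<in> \<Omega>} = integral {a..b} (indicator {t. (t, Y) \<in> \<Omega>})"
proof -
  have e: "{t \<in> {a..b}. (t, Y) \<in> \<Omega>} = {t. (t, Y) \<in> \<Omega>} \<inter> {a..b}" by auto
  show ?thesis unfolding e
    by (rule integral_indicator[symmetric]) (rule lmeas_open_Icc[OF open_slice_y[OF assms]])
qed

lemma xtilde_val: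
  assumes "frontier (cell h i j) \<inter> frontier \<Omega> = {x, y}"
  shows "xtilde \<Omega> h (i, j) = (1/2) *\<^sub>R (x + y)"
proof -
  define S where "S = frontier (cell h i j) \<inter> frontier \<Omega>"
  have ex: "\<exists>p. (case p of (x', y') \<Rightarrow> S = {x', y'})" using assms unfolding S_def by (intro exI[of _ "(x,y)"]) simp
  have "case (SOME p. case p of (x', y') \<Rightarrow> S = {x', y'}) of (x', y') \<Rightarrow> S = {x', y'}"
    by (rule someI_ex[OF ex])
  moreover obtain x' y' where e: "(SOME p. case p of (x', y') \<Rightarrow> S = {x', y'}) = (x', y')"
    by (cases "SOME p. case p of (x', y') \<Rightarrow> S = {x', y'}") blast
  ultimately have "S = {x', y'}" by simp
  then have d: "{x', y'} = {x, y}" using assms unfolding S_def by simp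
  have s: "x' + y' = x + y"
  proof -
    from d[unfolded doubleton_eq_iff] show ?thesis by (metis add.commute)
  qed
  have ex2: "\<exists>x y. S = {x, y}" using assms unfolding S_def by blast
  have "xtilde \<Omega> h (i, j) = (if \<exists>x y. S = {x, y} then (case (SOME p. case p of (x', y') \<Rightarrow> S = {x', y'}) of (x, y) \<Rightarrow> (1/2) *\<^sub>R (x + y)) else 0)"
    unfolding xtilde_def Let_def S_def by simp
  also have "\<dots> = (1/2) *\<^sub>R (x' + y')" using ex2 e by simp
  finally show ?thesis using s by simp
qed

lemma cell_formula:
  fixes \<Omega> :: "(real \<times> real) set"
  assumes h: "0 < h" and op: "open \<Omega>"
    and S2: "frontier (cell h i j) \<inter> frontier \<Omega> = {} \<or> (\<exists>x y. frontier (cell h i j) \<inter> frontier \<Omega> = {x, y})"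
  shows "cross2 (xtilde \<Omega> h (i, j)) (GH \<Omega> h (i, j)) * h^2
     = - (MH \<Omega> h i (j - 1) + MV \<Omega> h i j - MH \<Omega> h i j - MV \<Omega> h (i - 1) j)"
proof -
  define a1 where "a1 = (real_of_int i - 1/2) * h"
  define a2 where "a2 = (real_of_int j - 1/2) * h"
  have ia: "(real_of_int i + 1/2) * h = a1 + h" "(real_of_int (i - 1) + 1/2) * h = a1"
    "(real_of_int i - 1/2) * h = a1" unfolding a1_def by (simp_all add: algebra_simps)
  have ja: "(real_of_int j + 1/2) * h = a2 + h" "(real_of_int (j - 1) + 1/2) * h = a2"
    "(real_of_int j - 1/2) * h = a2" unfolding a2_def by (simp_all add: algebra_simps)
  have ce: "cell h i j = {a1..a1+h} \<times> {a2..a2+h}" unfolding cell_def ia ja ..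
  have xt: "\<And>x y. frontier ({a1..a1+h} \<times> {a2..a2+h}) \<inter> frontier \<Omega> = {x,y} \<Longrightarrow> xtilde \<Omega> h (i, j) = (1/2) *\<^sub>R (x + y)"
    using xtilde_val[of h i j \<Omega>] unfolding ce by blast
  have E: "fst (xtilde \<Omega> h (i, j)) * (integral {a1..a1+h} (indicator {x. (x,a2) \<in> \<Omega>}) - integral {a1..a1+h} (indicator {x. (x,a2+h) \<in> \<Omega>}))
       + snd (xtilde \<Omega> h (i, j)) * (integral {a2..a2+h} (indicator {y. (a1+h,y) \<in> \<Omega>}) - integral {a2..a2+h} (indicator {y. (a1,y) \<in> \<Omega>}))
     = integral {a1..a1+h} (\<lambda>x. indicator {x. (x,a2) \<in> \<Omega>} x * x)
       + integral {a2..a2+h} (\<lambda>y. indicator {y. (a1+h,y) \<in> \<Omega>} y * y)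
       - integral {a1..a1+h} (\<lambda>x. indicator {x. (x,a2+h) \<in> \<Omega>} x * x)
       - integral {a2..a2+h} (\<lambda>y. indicator {y. (a1,y) \<in> \<Omega>} y * y)"
    by (rule cell_identity[OF h op refl _ xt]) (use S2 in \<open>simp add: ce\<close>)
  have l1: "Hx \<Omega> h i j * h = integral {a2..a2+h} (indicator {y. (a1+h,y) \<in> \<Omega>})"
    unfolding Hx_def ia ja using meas_int_x[OF op] h by simp
  have l2: "Hx \<Omega> h (i - 1) j * h = integral {a2..a2+h} (indicator {y. (a1,y) \<in> \<Omega>})"
    unfolding Hx_def ia ja using meas_int_x[OF op] h by simp
  have l3: "Hy \<Omega> h i j * h = integral {a1..a1+h} (indicator {x. (x,a2+h) \<in> \<Omega>})"
    unfolding Hy_def ia ja using meas_int_y[OF op] h by simp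
  have l4: "Hy \<Omega> h i (j - 1) * h = integral {a1..a1+h} (indicator {x. (x,a2) \<in> \<Omega>})"
    unfolding Hy_def ia ja using meas_int_y[OF op] h by simp
  have m1: "MV \<Omega> h i j = integral {a2..a2+h} (\<lambda>y. indicator {y. (a1+h,y) \<in> \<Omega>} y * y)"
    unfolding MV_def ia ja ..
  have m2: "MV \<Omega> h (i - 1) j = integral {a2..a2+h} (\<lambda>y. indicator {y. (a1,y) \<in> \<Omega>} y * y)"
    unfolding MV_def ia ja ..
  have m3: "MH \<Omega> h i j = integral {a1..a1+h} (\<lambda>y. indicator {y. (y,a2+h) \<in> \<Omega>} y * y)"
    unfolding MH_def ia ja ..
  have m4: "MH \<Omega> h i (j - 1) = integral {a1..a1+h} (\<lambda>y. indicator {y. (y,a2) \<in> \<Omega>} y * y)"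
    unfolding MH_def ia ja ..
  have "cross2 (xtilde \<Omega> h (i, j)) (GH \<Omega> h (i, j)) * h^2
      = fst (xtilde \<Omega> h (i, j)) * (Hy \<Omega> h i j * h - Hy \<Omega> h i (j - 1) * h)
        - snd (xtilde \<Omega> h (i, j)) * (Hx \<Omega> h i j * h - Hx \<Omega> h (i - 1) j * h)"
    using h by (simp add: cross2_def GH_def power2_eq_square field_simps)
  also have "\<dots> = - (MH \<Omega> h i (j - 1) + MV \<Omega> h i j - MH \<Omega> h i j - MV \<Omega> h (i - 1) j)"
    unfolding l1 l2 l3 l4 m1 m2 m3 m4 using E by (simp add: algebra_simps)
  finally show ?thesis .
qed



lemma cell_mem: "0 < h \<Longrightarrow> (x, y) \<in> cell h i j \<longleftrightarrow>
   (real_of_int i - 1/2) * h \<le> x \<and> x \<le> (real_of_int i + 1/2) * h \<and>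
   (real_of_int j - 1/2) * h \<le> y \<and> y \<le> (real_of_int j + 1/2) * h"
  by (simp add: cell_def)

lemma OmegaH_mem: "(i, j) \<in> OmegaH \<Omega> h \<longleftrightarrow> (\<exists>p\<in>\<Omega>. p \<in> cell h i j)"
  by (auto simp: OmegaH_def)

lemma edge_x_supp:
  assumes h: "0 < h" and t: "t \<in> {(real_of_int j - 1/2) * h .. (real_of_int j + 1/2) * h}"
    and p: "((real_of_int i + 1/2) * h, t) \<in> \<Omega>"
  shows "(i, j) \<in> OmegaH \<Omega> h \<and> (i + 1, j) \<in> OmegaH \<Omega> h"
proof -
  have "((real_of_int i + 1/2) * h, t) \<in> cell h i j"
    using t h by (auto simp: cell_def algebra_simps)
  moreover have "((real_of_int i + 1/2) * h, t) \<in> cell h (i + 1) j"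
    using t h by (auto simp: cell_def algebra_simps)
  ultimately show ?thesis using p unfolding OmegaH_mem by blast
qed

lemma edge_y_supp:
  assumes h: "0 < h" and t: "t \<in> {(real_of_int i - 1/2) * h .. (real_of_int i + 1/2) * h}"
    and p: "(t, (real_of_int j + 1/2) * h) \<in> \<Omega>"
  shows "(i, j) \<in> OmegaH \<Omega> h \<and> (i, j + 1) \<in> OmegaH \<Omega> h"
proof -
  have "(t, (real_of_int j + 1/2) * h) \<in> cell h i j"
    using t h by (auto simp: cell_def algebra_simps)
  moreover have "(t, (real_of_int j + 1/2) * h) \<in> cell h i (j + 1)"
    using t h by (auto simp: cell_def algebra_simps)
  ultimately show ?thesis using p unfolding OmegaH_mem by blast
qed

lemma Hx_supp: "0 < h \<Longrightarrow> Hx \<Omega> h i j \<noteq> 0 \<Longrightarrow> (i, j) \<in> OmegaH \<Omega> h \<and> (i + 1, j) \<in> OmegaH \<Omega> h"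
proof -
  assume h: "0 < h" and n: "Hx \<Omega> h i j \<noteq> 0"
  have "{t \<in> {(real_of_int j - 1/2) * h .. (real_of_int j + 1/2) * h}. ((real_of_int i + 1/2) * h, t) \<in> \<Omega>} \<noteq> {}"
  proof
    assume e: "{t \<in> {(real_of_int j - 1/2) * h .. (real_of_int j + 1/2) * h}. ((real_of_int i + 1/2) * h, t) \<in> \<Omega>} = {}"
    show False using n unfolding Hx_def e by simp
  qed
  then show ?thesis using edge_x_supp[OF h] by blast
qed

lemma Hy_supp: "0 < h \<Longrightarrow> Hy \<Omega> h i j \<noteq> 0 \<Longrightarrow> (i, j) \<in> OmegaH \<Omega> h \<and> (i, j + 1) \<in> OmegaH \<Omega> h"
proof -
  assume h: "0 < h" and n: "Hy \<Omega> h i j \<noteq> 0"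
  have "{t \<in> {(real_of_int i - 1/2) * h .. (real_of_int i + 1/2) * h}. (t, (real_of_int j + 1/2) * h) \<in> \<Omega>} \<noteq> {}"
  proof
    assume e: "{t \<in> {(real_of_int i - 1/2) * h .. (real_of_int i + 1/2) * h}. (t, (real_of_int j + 1/2) * h) \<in> \<Omega>} = {}"
    show False using n unfolding Hy_def e by simp
  qed
  then show ?thesis using edge_y_supp[OF h] by blast
qed

lemma MV_supp: "0 < h \<Longrightarrow> MV \<Omega> h i j \<noteq> 0 \<Longrightarrow> (i, j) \<in> OmegaH \<Omega> h \<and> (i + 1, j) \<in> OmegaH \<Omega> h"
proof (rule ccontr)
  assume h: "0 < h" and n: "MV \<Omega> h i j \<noteq> 0" and c: "\<not> ((i, j) \<in> OmegaH \<Omega> h \<and> (i + 1, j) \<in> OmegaH \<Omega> h)"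
  then have z: "\<forall>t\<in>{(real_of_int j - 1/2) * h .. (real_of_int j + 1/2) * h}. ((real_of_int i + 1/2) * h, t) \<notin> \<Omega>"
    using edge_x_supp[OF h] by blast
  have "MV \<Omega> h i j = integral {(real_of_int j - 1/2) * h .. (real_of_int j + 1/2) * h} (\<lambda>t. 0)"
    unfolding MV_def by (rule integral_cong) (use z in auto)
  then show False using n by simp
qed

lemma MH_supp: "0 < h \<Longrightarrow> MH \<Omega> h i j \<noteq> 0 \<Longrightarrow> (i, j) \<in> OmegaH \<Omega> h \<and> (i, j + 1) \<in> OmegaH \<Omega> h"
proof (rule ccontr)
  assume h: "0 < h" and n: "MH \<Omega> h i j \<noteq> 0" and c: "\<not> ((i, j) \<in> OmegaH \<Omega> h \<and> (i, j + 1) \<in> OmegaH \<Omega> h)"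
  then have z: "\<forall>t\<in>{(real_of_int i - 1/2) * h .. (real_of_int i + 1/2) * h}. (t, (real_of_int j + 1/2) * h) \<notin> \<Omega>"
    using edge_y_supp[OF h] by blast
  have "MH \<Omega> h i j = integral {(real_of_int i - 1/2) * h .. (real_of_int i + 1/2) * h} (\<lambda>t. 0)"
    unfolding MH_def by (rule integral_cong) (use z in auto)
  then show False using n by simp
qed

lemma shift_sum:
  fixes F :: "'a \<Rightarrow> real"
  assumes fin: "finite K" and inj: "inj \<sigma>" and supp: "\<And>k. F k \<noteq> 0 \<Longrightarrow> k \<in> K \<and> k \<in> \<sigma> ` K"
  shows "(\<Sum>k\<in>K. F (\<sigma> k)) = (\<Sum>k\<in>K. F k)"
proof -
  have "(\<Sum>k\<in>K. F (\<sigma> k)) = (\<Sum>k\<in>\<sigma> ` K. F k)"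
    using sum.reindex[OF inj_on_subset[OF inj subset_UNIV, of K], of F] by simp
  also have "\<dots> = (\<Sum>k\<in>K \<union> \<sigma> ` K. F k)"
    by (rule sum.mono_neutral_left) (use fin supp in auto)
  also have "\<dots> = (\<Sum>k\<in>K. F k)"
    by (rule sum.mono_neutral_right) (use fin supp in auto)
  finally show ?thesis .
qed

definition sx :: "int \<times> int \<Rightarrow> int \<times> int" where "sx k = (fst k - 1, snd k)"
definition sy :: "int \<times> int \<Rightarrow> int \<times> int" where "sy k = (fst k, snd k - 1)"
definition tx :: "int \<times> int \<Rightarrow> int \<times> int" where "tx k = (fst k + 1, snd k)"
definition ty :: "int \<times> int \<Rightarrow> int \<times> int" where "ty k = (fst k, snd k + 1)"

lemma inj_sx: "inj sx" and inj_sy: "inj sy"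
  by (auto simp: inj_def sx_def sy_def prod_eq_iff)

lemma sx_tx[simp]: "sx (tx k) = k" "tx (sx k) = k" and sy_ty[simp]: "sy (ty k) = k" "ty (sy k) = k"
  by (auto simp: sx_def tx_def sy_def ty_def)

lemma telescope_x:
  fixes F :: "int \<times> int \<Rightarrow> real"
  assumes "finite K" "\<And>k. F k \<noteq> 0 \<Longrightarrow> k \<in> K \<and> tx k \<in> K"
  shows "(\<Sum>k\<in>K. F k - F (sx k)) = 0"
proof -
  have "(\<Sum>k\<in>K. F (sx k)) = (\<Sum>k\<in>K. F k)"
  proof (rule shift_sum[OF assms(1) inj_sx])
    fix k assume "F k \<noteq> 0"
    with assms(2) have "k \<in> K" "tx k \<in> K" by auto
    then show "k \<in> K \<and> k \<in> sx ` K" by (metis image_eqI sx_tx(1))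
  qed
  then show ?thesis by (simp add: sum_subtractf)
qed

lemma telescope_y:
  fixes F :: "int \<times> int \<Rightarrow> real"
  assumes "finite K" "\<And>k. F k \<noteq> 0 \<Longrightarrow> k \<in> K \<and> ty k \<in> K"
  shows "(\<Sum>k\<in>K. F k - F (sy k)) = 0"
proof -
  have "(\<Sum>k\<in>K. F (sy k)) = (\<Sum>k\<in>K. F k)"
  proof (rule shift_sum[OF assms(1) inj_sy])
    fix k assume "F k \<noteq> 0"
    with assms(2) have "k \<in> K" "ty k \<in> K" by auto
    then show "k \<in> K \<and> k \<in> sy ` K" by (metis image_eqI sy_ty(1))
  qed
  then show ?thesis by (simp add: sum_subtractf)
qed



lemma idx_bound:
  fixes h x R :: real and i :: int
  assumes h: "0 < h" and x: "\<bar>x\<bar> \<le> R" and l: "(real_of_int i - 1/2) * h \<le> x" and u: "x \<le> (real_of_int i + 1/2) * h"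
  shows "i \<in> {-(\<lceil>R/h\<rceil> + 1)..\<lceil>R/h\<rceil> + 1}"
proof -
  have l': "real_of_int i * h - h/2 \<le> x" using l by (simp add: algebra_simps)
  have u': "x \<le> real_of_int i * h + h/2" using u by (simp add: algebra_simps)
  have x': "x \<le> R" "- R \<le> x" using x by auto
  have a: "real_of_int i * h \<le> R + h" using l' x' h by linarith
  have b: "- R - h \<le> real_of_int i * h" using u' x' h by linarith
  have a': "real_of_int i \<le> R / h + 1" using a h by (simp add: field_simps)
  have b': "- (R / h) - 1 \<le> real_of_int i" using b h by (simp add: field_simps)
  have c: "R / h \<le> real_of_int \<lceil>R/h\<rceil>" by (rule le_of_int_ceiling)
  have "real_of_int i \<le> real_of_int (\<lceil>R/h\<rceil> + 1)" using a' c by (simp only: of_int_add of_int_1)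
  moreover have "real_of_int (-(\<lceil>R/h\<rceil> + 1)) \<le> real_of_int i" using b' c by (simp only: of_int_minus of_int_add of_int_1)
  ultimately show ?thesis by (simp only: atLeastAtMost_iff of_int_le_iff)
qed

lemma finite_OmegaH:
  fixes \<Omega> :: "(real \<times> real) set"
  assumes "bounded \<Omega>" "0 < h"
  shows "finite (OmegaH \<Omega> h)"
proof -
  obtain R where R: "\<And>p. p \<in> \<Omega> \<Longrightarrow> norm p \<le> R" using assms(1) unfolding bounded_iff by blast
  define N where "N = \<lceil>R/h\<rceil> + 1"
  have "OmegaH \<Omega> h \<subseteq> {-N..N} \<times> {-N..N}"
  proof
    fix k assume k: "k \<in> OmegaH \<Omega> h"
    obtain i j where kij: "k = (i, j)" by fastforce
    from k[unfolded kij OmegaH_mem] obtain pp where pp: "pp \<in> \<Omega>" "pp \<in> cell h i j" by blast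
    obtain x y where "pp = (x, y)" by fastforce
    then have p: "(x, y) \<in> \<Omega>" "(x, y) \<in> cell h i j" using pp by auto
    have "norm x \<le> norm (x, y)" by (rule norm_fst_le)
    then have x: "\<bar>x\<bar> \<le> R" using R[OF p(1)] by simp
    have "norm y \<le> norm (x, y)" by (rule norm_snd_le)
    then have y: "\<bar>y\<bar> \<le> R" using R[OF p(1)] by simp
    have "i \<in> {-N..N}" unfolding N_def
      by (rule idx_bound[OF assms(2) x]) (use p(2) assms(2) in \<open>auto simp: cell_mem\<close>)
    moreover have "j \<in> {-N..N}" unfolding N_def
      by (rule idx_bound[OF assms(2) y]) (use p(2) assms(2) in \<open>auto simp: cell_mem\<close>)
    ultimately show "k \<in> {-N..N} \<times> {-N..N}" using kij by simp
  qed
  then show ?thesis by (rule finite_subset) simp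
qed

lemma GH_fst: "fst (GH \<Omega> h k) = (Hx \<Omega> h (fst k) (snd k) - Hx \<Omega> h (fst (sx k)) (snd (sx k))) / h"
  by (cases k) (simp add: GH_def sx_def)

lemma GH_snd: "snd (GH \<Omega> h k) = (Hy \<Omega> h (fst k) (snd k) - Hy \<Omega> h (fst (sy k)) (snd (sy k))) / h"
  by (cases k) (simp add: GH_def sy_def)

lemma sum_GH_fst:
  assumes fin: "finite (OmegaH \<Omega> h)" and h: "0 < h"
  shows "(\<Sum>k\<in>OmegaH \<Omega> h. fst (GH \<Omega> h k)) = 0"
proof -
  have "(\<Sum>k\<in>OmegaH \<Omega> h. Hx \<Omega> h (fst k) (snd k) - Hx \<Omega> h (fst (sx k)) (snd (sx k))) = 0"
    by (rule telescope_x[OF fin, where F="\<lambda>k. Hx \<Omega> h (fst k) (snd k)"])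
       (use Hx_supp[OF h] in \<open>auto simp: tx_def\<close>)
  then show ?thesis unfolding GH_fst by (simp add: sum_divide_distrib[symmetric])
qed

lemma sum_GH_snd:
  assumes fin: "finite (OmegaH \<Omega> h)" and h: "0 < h"
  shows "(\<Sum>k\<in>OmegaH \<Omega> h. snd (GH \<Omega> h k)) = 0"
proof -
  have "(\<Sum>k\<in>OmegaH \<Omega> h. Hy \<Omega> h (fst k) (snd k) - Hy \<Omega> h (fst (sy k)) (snd (sy k))) = 0"
    by (rule telescope_y[OF fin, where F="\<lambda>k. Hy \<Omega> h (fst k) (snd k)"])
       (use Hy_supp[OF h] in \<open>auto simp: ty_def\<close>)
  then show ?thesis unfolding GH_snd by (simp add: sum_divide_distrib[symmetric])
qed

lemma sum_J:
  fixes \<Omega> :: "(real \<times> real) set"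
  assumes fin: "finite (OmegaH \<Omega> h)" and h: "0 < h" and op: "open \<Omega>"
    and xd: "\<forall>(i, j)\<in>OmegaH \<Omega> h.
          frontier (cell h i j) \<inter> frontier \<Omega> = {} \<or>
          (\<exists>x y. frontier (cell h i j) \<inter> frontier \<Omega> = {x, y})"
  shows "(\<Sum>k\<in>OmegaH \<Omega> h. Jh \<Omega> h c k) = 0"
proof -
  define K where "K = OmegaH \<Omega> h"
  define mv where "mv = (\<lambda>k. MV \<Omega> h (fst k) (snd k))"
  define mh where "mh = (\<lambda>k. MH \<Omega> h (fst k) (snd k))"
  have cf: "cross2 (xtilde \<Omega> h k) (GH \<Omega> h k) = ((mh k - mh (sy k)) - (mv k - mv (sx k))) / h^2" if "k \<in> K" for k
  proof -
    obtain i j where k: "k = (i, j)" by fastforce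
    have "cross2 (xtilde \<Omega> h (i, j)) (GH \<Omega> h (i, j)) * h^2
     = - (MH \<Omega> h i (j - 1) + MV \<Omega> h i j - MH \<Omega> h i j - MV \<Omega> h (i - 1) j)"
      by (rule cell_formula[OF h op]) (use xd that k in \<open>auto simp: K_def\<close>)
    then show ?thesis using h unfolding k mv_def mh_def sx_def sy_def by (simp add: field_simps)
  qed
  have t1: "(\<Sum>k\<in>K. mv k - mv (sx k)) = 0"
    by (rule telescope_x) (use fin MV_supp[OF h] in \<open>auto simp: K_def mv_def tx_def\<close>)
  have t2: "(\<Sum>k\<in>K. mh k - mh (sy k)) = 0"
    by (rule telescope_y) (use fin MH_supp[OF h] in \<open>auto simp: K_def mh_def ty_def\<close>)
  have s1: "(\<Sum>k\<in>K. cross2 (xtilde \<Omega> h k) (GH \<Omega> h k)) = 0"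
  proof -
    have "(\<Sum>k\<in>K. cross2 (xtilde \<Omega> h k) (GH \<Omega> h k)) = (\<Sum>k\<in>K. ((mh k - mh (sy k)) - (mv k - mv (sx k))) / h^2)"
      by (rule sum.cong) (use cf in auto)
    also have "\<dots> = ((\<Sum>k\<in>K. mh k - mh (sy k)) - (\<Sum>k\<in>K. mv k - mv (sx k))) / h^2"
      by (simp add: sum_divide_distrib[symmetric] sum_subtractf)
    finally show ?thesis using t1 t2 by simp
  qed
  have "(\<Sum>k\<in>K. Jh \<Omega> h c k) = (\<Sum>k\<in>K. cross2 (xtilde \<Omega> h k) (GH \<Omega> h k))
      - (fst c * (\<Sum>k\<in>K. snd (GH \<Omega> h k)) - snd c * (\<Sum>k\<in>K. fst (GH \<Omega> h k)))"
  proof -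
    have "\<And>k. Jh \<Omega> h c k = cross2 (xtilde \<Omega> h k) (GH \<Omega> h k) - (fst c * snd (GH \<Omega> h k) - snd c * fst (GH \<Omega> h k))"
      by (simp add: Jh_def cross2_def algebra_simps)
    then show ?thesis by (simp add: sum_subtractf sum_distrib_left)
  qed
  also have "\<dots> = 0" using s1 sum_GH_fst[OF fin h] sum_GH_snd[OF fin h] unfolding K_def by simp
  finally show ?thesis unfolding K_def .
qed



definition extK :: "(real \<times> real) set \<Rightarrow> real \<Rightarrow> (int \<times> int \<Rightarrow> real) \<Rightarrow> int \<times> int \<Rightarrow> real" where
  "extK \<Omega> h p l = (if l \<in> OmegaH \<Omega> h then p l else 0)"
definition qx where "qx \<Omega> h \<rho> q k = Hx \<Omega> h (fst k) (snd k) / \<rho> * Gx h q (fst k) (snd k)"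
definition qy where "qy \<Omega> h \<rho> q k = Hy \<Omega> h (fst k) (snd k) / \<rho> * Gy h q (fst k) (snd k)"
definition SX where "SX \<Omega> h q = (\<Sum>l\<in>OmegaH \<Omega> h. q l * fst (GH \<Omega> h l))"
definition SY where "SY \<Omega> h q = (\<Sum>l\<in>OmegaH \<Omega> h. q l * snd (GH \<Omega> h l))"
definition SZ where "SZ \<Omega> h c q = (\<Sum>l\<in>OmegaH \<Omega> h. q l * Jh \<Omega> h c l)"

lemma Lh_expand:
  "Lh \<Omega> h \<rho> m II c p k =
     - ((qx \<Omega> h \<rho> (extK \<Omega> h p) k - qx \<Omega> h \<rho> (extK \<Omega> h p) (sx k)) / h
        + (qy \<Omega> h \<rho> (extK \<Omega> h p) k - qy \<Omega> h \<rho> (extK \<Omega> h p) (sy k)) / h)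
     + (fst (GH \<Omega> h k) * (h^2 * SX \<Omega> h (extK \<Omega> h p)) + snd (GH \<Omega> h k) * (h^2 * SY \<Omega> h (extK \<Omega> h p))) / m
     + Jh \<Omega> h c k * (h^2 * SZ \<Omega> h c (extK \<Omega> h p)) / II"
proof -
  define q where "q = extK \<Omega> h p"
  have q': "(\<lambda>l. if l \<in> OmegaH \<Omega> h then p l else 0) = q" unfolding q_def extK_def by simp
  have D: "Dh h (\<lambda>i j. Hx \<Omega> h i j / \<rho> * Gx h q i j) (\<lambda>i j. Hy \<Omega> h i j / \<rho> * Gy h q i j) k
     = (qx \<Omega> h \<rho> q k - qx \<Omega> h \<rho> q (sx k)) / h + (qy \<Omega> h \<rho> q k - qy \<Omega> h \<rho> q (sy k)) / h"
    by (cases k) (simp add: Dh_def qx_def qy_def sx_def sy_def)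
  have f: "fst (\<Sum>l\<in>OmegaH \<Omega> h. (q l * h^2) *\<^sub>R GH \<Omega> h l) = h^2 * SX \<Omega> h q"
    by (simp add: fst_sum SX_def sum_distrib_left algebra_simps)
  have s: "snd (\<Sum>l\<in>OmegaH \<Omega> h. (q l * h^2) *\<^sub>R GH \<Omega> h l) = h^2 * SY \<Omega> h q"
    by (simp add: snd_sum SY_def sum_distrib_left algebra_simps)
  have z: "(\<Sum>l\<in>OmegaH \<Omega> h. q l * Jh \<Omega> h c l * h^2) = h^2 * SZ \<Omega> h c q"
    by (simp add: SZ_def sum_distrib_left algebra_simps)
  show ?thesis
    unfolding Lh_def Let_def q' D dot2_def fst_scaleR snd_scaleR f s z q_def[symmetric]
    by (simp add: algebra_simps add_divide_distrib)
qed

lemma sbp_x: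
  fixes u w :: "int \<times> int \<Rightarrow> real"
  assumes "finite K" "\<And>k. u k \<noteq> 0 \<Longrightarrow> k \<in> K \<and> tx k \<in> K"
  shows "(\<Sum>k\<in>K. (u k - u (sx k)) * w k) = (\<Sum>k\<in>K. u k * (w k - w (tx k)))"
proof -
  have "(\<Sum>k\<in>K. (\<lambda>k. u k * w (tx k)) (sx k)) = (\<Sum>k\<in>K. u k * w (tx k))"
  proof (rule shift_sum[OF assms(1) inj_sx])
    fix k assume "u k * w (tx k) \<noteq> 0"
    then have "u k \<noteq> 0" by auto
    with assms(2) have "k \<in> K" "tx k \<in> K" by auto
    then show "k \<in> K \<and> k \<in> sx ` K" by (metis image_eqI sx_tx(1))
  qed
  then show ?thesis by (simp add: algebra_simps sum_subtractf)
qed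

lemma sbp_y:
  fixes u w :: "int \<times> int \<Rightarrow> real"
  assumes "finite K" "\<And>k. u k \<noteq> 0 \<Longrightarrow> k \<in> K \<and> ty k \<in> K"
  shows "(\<Sum>k\<in>K. (u k - u (sy k)) * w k) = (\<Sum>k\<in>K. u k * (w k - w (ty k)))"
proof -
  have "(\<Sum>k\<in>K. (\<lambda>k. u k * w (ty k)) (sy k)) = (\<Sum>k\<in>K. u k * w (ty k))"
  proof (rule shift_sum[OF assms(1) inj_sy])
    fix k assume "u k * w (ty k) \<noteq> 0"
    then have "u k \<noteq> 0" by auto
    with assms(2) have "k \<in> K" "ty k \<in> K" by auto
    then show "k \<in> K \<and> k \<in> sy ` K" by (metis image_eqI sy_ty(1))
  qed
  then show ?thesis by (simp add: algebra_simps sum_subtractf)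
qed

lemma Bform:
  fixes \<Omega> :: "(real \<times> real) set"
  assumes fin: "finite (OmegaH \<Omega> h)" and h: "0 < h" and m: "m \<noteq> 0" and II: "II \<noteq> 0" and rho: "\<rho> \<noteq> 0"
  shows "(\<Sum>k\<in>OmegaH \<Omega> h. Lh \<Omega> h \<rho> m II c p k * w k) =
    (\<Sum>k\<in>OmegaH \<Omega> h. Hx \<Omega> h (fst k) (snd k) / \<rho> * Gx h (extK \<Omega> h p) (fst k) (snd k) * Gx h (extK \<Omega> h w) (fst k) (snd k)
       + Hy \<Omega> h (fst k) (snd k) / \<rho> * Gy h (extK \<Omega> h p) (fst k) (snd k) * Gy h (extK \<Omega> h w) (fst k) (snd k))
    + h^2 / m * (SX \<Omega> h (extK \<Omega> h p) * SX \<Omega> h (extK \<Omega> h w) + SY \<Omega> h (extK \<Omega> h p) * SY \<Omega> h (extK \<Omega> h w))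
    + h^2 / II * (SZ \<Omega> h c (extK \<Omega> h p) * SZ \<Omega> h c (extK \<Omega> h w))"
proof -
  define K where "K = OmegaH \<Omega> h"
  define P where "P = extK \<Omega> h p"
  define W where "W = extK \<Omega> h w"
  define ux where "ux = qx \<Omega> h \<rho> P"
  define uy where "uy = qy \<Omega> h \<rho> P"
  have finK: "finite K" using fin by (simp add: K_def)
  have "(\<Sum>k\<in>K. Lh \<Omega> h \<rho> m II c p k * w k) = (\<Sum>k\<in>K. Lh \<Omega> h \<rho> m II c p k * W k)"
    by (rule sum.cong) (auto simp: W_def extK_def K_def)
  also have "\<dots> = (\<Sum>k\<in>K. - (1/h) * ((ux k - ux (sx k)) * W k) - (1/h) * ((uy k - uy (sy k)) * W k)
       + h^2/m * SX \<Omega> h P * (W k * fst (GH \<Omega> h k)) + h^2/m * SY \<Omega> h P * (W k * snd (GH \<Omega> h k))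
       + h^2/II * SZ \<Omega> h c P * (W k * Jh \<Omega> h c k))"
    by (rule sum.cong) (use h m II in \<open>simp_all add: Lh_expand ux_def uy_def P_def field_simps\<close>)
  also have "\<dots> = - (1/h) * (\<Sum>k\<in>K. (ux k - ux (sx k)) * W k) - (1/h) * (\<Sum>k\<in>K. (uy k - uy (sy k)) * W k)
       + h^2/m * SX \<Omega> h P * (\<Sum>k\<in>K. W k * fst (GH \<Omega> h k)) + h^2/m * SY \<Omega> h P * (\<Sum>k\<in>K. W k * snd (GH \<Omega> h k))
       + h^2/II * SZ \<Omega> h c P * (\<Sum>k\<in>K. W k * Jh \<Omega> h c k)"
    by (simp add: sum.distrib sum_subtractf sum_distrib_left)
  also have "(\<Sum>k\<in>K. (ux k - ux (sx k)) * W k) = (\<Sum>k\<in>K. ux k * (W k - W (tx k)))"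
    by (rule sbp_x[OF finK]) (use Hx_supp[OF h] in \<open>auto simp: ux_def qx_def K_def tx_def\<close>)
  also have "(\<Sum>k\<in>K. (uy k - uy (sy k)) * W k) = (\<Sum>k\<in>K. uy k * (W k - W (ty k)))"
    by (rule sbp_y[OF finK]) (use Hy_supp[OF h] in \<open>auto simp: uy_def qy_def K_def ty_def\<close>)
  also have "- (1/h) * (\<Sum>k\<in>K. ux k * (W k - W (tx k))) - (1/h) * (\<Sum>k\<in>K. uy k * (W k - W (ty k)))
     = (\<Sum>k\<in>K. Hx \<Omega> h (fst k) (snd k) / \<rho> * Gx h P (fst k) (snd k) * Gx h W (fst k) (snd k)
       + Hy \<Omega> h (fst k) (snd k) / \<rho> * Gy h P (fst k) (snd k) * Gy h W (fst k) (snd k))"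
  proof -
    have "\<And>k. - (1/h) * (ux k * (W k - W (tx k))) - (1/h) * (uy k * (W k - W (ty k)))
       = Hx \<Omega> h (fst k) (snd k) / \<rho> * Gx h P (fst k) (snd k) * Gx h W (fst k) (snd k)
       + Hy \<Omega> h (fst k) (snd k) / \<rho> * Gy h P (fst k) (snd k) * Gy h W (fst k) (snd k)"
      using h rho by (case_tac k) (simp add: ux_def uy_def qx_def qy_def Gx_def Gy_def tx_def ty_def field_simps)
    then show ?thesis by (simp add: sum_distrib_left sum_subtractf[symmetric])
  qed
  finally have R: "(\<Sum>k\<in>K. Lh \<Omega> h \<rho> m II c p k * w k) = (\<Sum>k\<in>K. Hx \<Omega> h (fst k) (snd k) / \<rho> * Gx h P (fst k) (snd k) * Gx h W (fst k) (snd k)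
       + Hy \<Omega> h (fst k) (snd k) / \<rho> * Gy h P (fst k) (snd k) * Gy h W (fst k) (snd k))
       + h\<^sup>2 / m * SX \<Omega> h P * (\<Sum>k\<in>K. W k * fst (GH \<Omega> h k)) + h\<^sup>2 / m * SY \<Omega> h P * (\<Sum>k\<in>K. W k * snd (GH \<Omega> h k))
       + h\<^sup>2 / II * SZ \<Omega> h c P * (\<Sum>k\<in>K. W k * Jh \<Omega> h c k)" .
  have X: "(\<Sum>k\<in>K. W k * fst (GH \<Omega> h k)) = SX \<Omega> h W" by (simp add: SX_def K_def)
  have Y: "(\<Sum>k\<in>K. W k * snd (GH \<Omega> h k)) = SY \<Omega> h W" by (simp add: SY_def K_def)
  have Z: "(\<Sum>k\<in>K. W k * Jh \<Omega> h c k) = SZ \<Omega> h c W" by (simp add: SZ_def K_def)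
  show ?thesis using R unfolding X Y Z unfolding K_def P_def W_def by (simp add: algebra_simps)
qed



lemma slice_pos:
  fixes S :: "real set"
  assumes op: "open S" and y: "y \<in> S" "lo \<le> y" "y \<le> hi" and lh: "lo < hi"
  shows "measure lebesgue {t \<in> {lo..hi}. t \<in> S} > 0"
proof -
  obtain r where r: "r > 0" "ball y r \<subseteq> S" using op y(1) open_contains_ball by blast
  define \<delta> where "\<delta> = min r (hi - lo) / 2"
  have d: "0 < \<delta>" "\<delta> < r" "2 * \<delta> \<le> hi - lo" using r lh by (auto simp: \<delta>_def min_def)
  obtain a where a: "{a..a+\<delta>} \<subseteq> {t \<in> {lo..hi}. t \<in> S}"
  proof (cases "y + \<delta> \<le> hi")
    case True
    have "{y..y+\<delta>} \<subseteq> {t \<in> {lo..hi}. t \<in> S}"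
    proof
      fix t assume t: "t \<in> {y..y+\<delta>}"
      then have "t \<in> ball y r" using d by (auto simp: dist_real_def)
      then show "t \<in> {t \<in> {lo..hi}. t \<in> S}" using r t y True by auto
    qed
    then show ?thesis by (rule that)
  next
    case False
    have "{y-\<delta>..y-\<delta>+\<delta>} \<subseteq> {t \<in> {lo..hi}. t \<in> S}"
    proof
      fix t assume t: "t \<in> {y-\<delta>..y-\<delta>+\<delta>}"
      then have "t \<in> ball y r" using d by (auto simp: dist_real_def)
      then show "t \<in> {t \<in> {lo..hi}. t \<in> S}" using r t y False d by auto
    qed
    then show ?thesis by (rule that)
  qed
  have E: "{t \<in> {lo..hi}. t \<in> S} \<in> lmeasurable"
  proof -
    have "{t \<in> {lo..hi}. t \<in> S} = S \<inter> {lo..hi}" by auto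
    then show ?thesis using lmeas_open_Icc[OF op] by simp
  qed
  have "measure lebesgue {a..a+\<delta>} \<le> measure lebesgue {t \<in> {lo..hi}. t \<in> S}"
    by (rule measure_mono_fmeasurable[OF a _ E]) simp
  then show ?thesis using d by simp
qed

lemma adj_x:
  fixes \<Omega> :: "(real \<times> real) set"
  assumes h: "0 < h" and op: "open \<Omega>" and p: "(x, y) \<in> \<Omega>" "(x, y) \<in> cell h i j" "(x, y) \<in> cell h (i + 1) j"
  shows "Hx \<Omega> h i j > 0"
proof -
  have x: "x = (real_of_int i + 1/2) * h" using p(2,3) h by (auto simp: cell_def algebra_simps)
  have y: "(real_of_int j - 1/2) * h \<le> y" "y \<le> (real_of_int j + 1/2) * h" using p(2) by (auto simp: cell_def)
  have "measure lebesgue {t \<in> {(real_of_int j - 1/2) * h .. (real_of_int j + 1/2) * h}. t \<in> {t. (x, t) \<in> \<Omega>}} > 0"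
    by (rule slice_pos[OF open_slice_x[OF op]]) (use p(1) y h in \<open>auto simp: algebra_simps\<close>)
  then show ?thesis unfolding Hx_def using h x by simp
qed

lemma adj_y:
  fixes \<Omega> :: "(real \<times> real) set"
  assumes h: "0 < h" and op: "open \<Omega>" and p: "(x, y) \<in> \<Omega>" "(x, y) \<in> cell h i j" "(x, y) \<in> cell h i (j + 1)"
  shows "Hy \<Omega> h i j > 0"
proof -
  have y: "y = (real_of_int j + 1/2) * h" using p(2,3) h by (auto simp: cell_def algebra_simps)
  have x: "(real_of_int i - 1/2) * h \<le> x" "x \<le> (real_of_int i + 1/2) * h" using p(2) by (auto simp: cell_def)
  have "measure lebesgue {t \<in> {(real_of_int i - 1/2) * h .. (real_of_int i + 1/2) * h}. t \<in> {t. (t, y) \<in> \<Omega>}} > 0"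
    by (rule slice_pos[OF open_slice_y[OF op]]) (use p(1) x h in \<open>auto simp: algebra_simps\<close>)
  then show ?thesis unfolding Hy_def using h y by simp
qed

lemma int_close:
  fixes a b :: int and h x :: real
  assumes h: "0 < h" and "(real_of_int a - 1/2) * h \<le> x" "x \<le> (real_of_int b + 1/2) * h"
  shows "a \<le> b + 1"
proof -
  have "(real_of_int a - 1/2) * h \<le> (real_of_int b + 1/2) * h" using assms by linarith
  then have "real_of_int a - 1/2 \<le> real_of_int b + 1/2" using h by (simp add: mult_le_cancel_right)
  then have "real_of_int a \<le> real_of_int (b + 1)" by simp
  then show ?thesis by (simp only: of_int_le_iff)
qed

lemma cell_step:
  fixes \<Omega> :: "(real \<times> real) set" and p :: "int \<times> int \<Rightarrow> real"
  assumes h: "0 < h" and op: "open \<Omega>"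
    and ax: "\<And>i j. Hx \<Omega> h i j > 0 \<Longrightarrow> p (i + 1, j) = p (i, j)"
    and ay: "\<And>i j. Hy \<Omega> h i j > 0 \<Longrightarrow> p (i, j + 1) = p (i, j)"
    and q: "(x, y) \<in> \<Omega>" "(x, y) \<in> cell h i1 j1" "(x, y) \<in> cell h i2 j2"
  shows "p (i1, j1) = p (i2, j2)"
proof -
  have b1: "(real_of_int i1 - 1/2) * h \<le> x" "x \<le> (real_of_int i1 + 1/2) * h"
     "(real_of_int j1 - 1/2) * h \<le> y" "y \<le> (real_of_int j1 + 1/2) * h" using q(2) by (auto simp: cell_def)
  have b2: "(real_of_int i2 - 1/2) * h \<le> x" "x \<le> (real_of_int i2 + 1/2) * h"
     "(real_of_int j2 - 1/2) * h \<le> y" "y \<le> (real_of_int j2 + 1/2) * h" using q(3) by (auto simp: cell_def)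
  have ii: "i1 \<le> i2 + 1" "i2 \<le> i1 + 1" using int_close[OF h] b1 b2 by blast+
  have jj: "j1 \<le> j2 + 1" "j2 \<le> j1 + 1" using int_close[OF h] b1 b2 by blast+
  have mid: "(x, y) \<in> cell h i2 j1" using b1 b2 by (auto simp: cell_def)
  have s1: "p (i1, j1) = p (i2, j1)"
  proof -
    consider "i2 = i1" | "i2 = i1 + 1" | "i1 = i2 + 1" using ii by linarith
    then show ?thesis
    proof cases
      case 1 then show ?thesis by simp
    next
      case 2
      have "Hx \<Omega> h i1 j1 > 0" by (rule adj_x[OF h op q(1) q(2)]) (use mid 2 in simp)
      then show ?thesis using ax 2 by metis
    next
      case 3
      have "Hx \<Omega> h i2 j1 > 0" by (rule adj_x[OF h op q(1) mid]) (use q(2) 3 in simp)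
      then show ?thesis using ax 3 by metis
    qed
  qed
  have s2: "p (i2, j1) = p (i2, j2)"
  proof -
    consider "j2 = j1" | "j2 = j1 + 1" | "j1 = j2 + 1" using jj by linarith
    then show ?thesis
    proof cases
      case 1 then show ?thesis by simp
    next
      case 2
      have "Hy \<Omega> h i2 j1 > 0" by (rule adj_y[OF h op q(1) mid]) (use q(3) 2 in simp)
      then show ?thesis using ay 2 by metis
    next
      case 3
      have "Hy \<Omega> h i2 j2 > 0" by (rule adj_y[OF h op q(1) q(3)]) (use mid 3 in simp)
      then show ?thesis using ay 3 by metis
    qed
  qed
  show ?thesis using s1 s2 by simp
qed



lemma cell_cover:
  assumes h: "0 < h"
  shows "\<exists>i j. (x, y) \<in> cell h i j"
proof -
  have a: "\<And>z. \<exists>i::int. (real_of_int i - 1/2) * h \<le> z \<and> z \<le> (real_of_int i + 1/2) * h"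
  proof -
    fix z
    define i where "i = \<lfloor>z / h + 1/2\<rfloor>"
    have f: "real_of_int i \<le> z / h + 1/2" "z / h + 1/2 < real_of_int i + 1"
      unfolding i_def by linarith+
    have "(real_of_int i - 1/2) \<le> z / h" "z / h \<le> real_of_int i + 1/2" using f by linarith+
    then have "(real_of_int i - 1/2) * h \<le> z" "z \<le> (real_of_int i + 1/2) * h"
      using h by (simp_all add: field_simps)
    then show "\<exists>i::int. (real_of_int i - 1/2) * h \<le> z \<and> z \<le> (real_of_int i + 1/2) * h" by blast
  qed
  obtain i where "(real_of_int i - 1/2) * h \<le> x \<and> x \<le> (real_of_int i + 1/2) * h" using a by blast
  moreover obtain j where "(real_of_int j - 1/2) * h \<le> y \<and> y \<le> (real_of_int j + 1/2) * h" using a by blast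
  ultimately show ?thesis by (auto simp: cell_def)
qed

lemma const_K:
  fixes \<Omega> :: "(real \<times> real) set" and p :: "int \<times> int \<Rightarrow> real"
  assumes h: "0 < h" and op: "open \<Omega>" and conn: "connected \<Omega>" and ne: "\<Omega> \<noteq> {}"
    and fin: "finite (OmegaH \<Omega> h)"
    and ax: "\<And>i j. Hx \<Omega> h i j > 0 \<Longrightarrow> p (i + 1, j) = p (i, j)"
    and ay: "\<And>i j. Hy \<Omega> h i j > 0 \<Longrightarrow> p (i, j + 1) = p (i, j)"
  shows "\<exists>a. \<forall>k\<in>OmegaH \<Omega> h. p k = a"
proof -
  define K where "K = OmegaH \<Omega> h"
  define C where "C = (\<lambda>k. cell h (fst k) (snd k))"
  have inK: "\<And>x y i j. (x, y) \<in> \<Omega> \<Longrightarrow> (x, y) \<in> cell h i j \<Longrightarrow> (i, j) \<in> K"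
    unfolding K_def OmegaH_mem by blast
  have closedC: "closed (C k)" for k unfolding C_def cell_def by (intro closed_Times closed_atLeastAtMost)
  obtain x0 y0 where p0: "(x0, y0) \<in> \<Omega>" using ne by fastforce
  obtain i0 j0 where c0: "(x0, y0) \<in> cell h i0 j0" using cell_cover[OF h] by blast
  define a where "a = p (i0, j0)"
  define E1 where "E1 = \<Omega> \<inter> \<Union>(C ` {k\<in>K. p k = a})"
  define E2 where "E2 = \<Omega> \<inter> \<Union>(C ` {k\<in>K. p k \<noteq> a})"
  have cl1: "closedin (top_of_set \<Omega>) E1" unfolding E1_def
    by (rule closedin_closed_Int) (use fin closedC in \<open>auto simp: K_def intro!: closed_Union\<close>)
  have cl2: "closedin (top_of_set \<Omega>) E2" unfolding E2_def
    by (rule closedin_closed_Int) (use fin closedC in \<open>auto simp: K_def intro!: closed_Union\<close>)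
  have cov: "\<Omega> \<subseteq> E1 \<union> E2"
  proof
    fix z assume z: "z \<in> \<Omega>"
    obtain x y where zxy: "z = (x, y)" by fastforce
    obtain i j where c: "(x, y) \<in> cell h i j" using cell_cover[OF h] by blast
    have "(i, j) \<in> K" using inK z c zxy by blast
    then show "z \<in> E1 \<union> E2" using z c zxy unfolding E1_def E2_def C_def by force
  qed
  have disj: "E1 \<inter> E2 = {}"
  proof (rule ccontr)
    assume "E1 \<inter> E2 \<noteq> {}"
    then obtain z k1 k2 where z: "z \<in> \<Omega>" "z \<in> C k1" "z \<in> C k2" "p k1 = a" "p k2 \<noteq> a"
      unfolding E1_def E2_def by blast
    obtain x y where zxy: "z = (x, y)" by fastforce
    have "p (fst k1, snd k1) = p (fst k2, snd k2)"
      by (rule cell_step[OF h op ax ay]) (use z zxy in \<open>auto simp: C_def\<close>)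
    then show False using z by simp
  qed
  have ne1: "E1 \<noteq> {}"
  proof -
    have "(i0, j0) \<in> K" using inK p0 c0 by blast
    then have "(x0, y0) \<in> E1" using p0 c0 unfolding E1_def C_def a_def by force
    then show ?thesis by blast
  qed
  have E2e: "E2 = {}" using conn cl1 cl2 cov disj ne1 unfolding connected_closedin by blast
  have "\<forall>k\<in>K. p k = a"
  proof (rule ballI, rule ccontr)
    fix k assume k: "k \<in> K" and n: "p k \<noteq> a"
    obtain z where z: "z \<in> \<Omega>" "z \<in> C k" using k unfolding K_def OmegaH_def C_def by (cases k) auto
    then have "z \<in> E2" using k n unfolding E2_def by blast
    then show False using E2e by blast
  qed
  then show ?thesis unfolding K_def by blast
qed



lemma Hx_nonneg: "0 < h \<Longrightarrow> 0 \<le> Hx \<Omega> h i j" by (simp add: Hx_def)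
lemma Hy_nonneg: "0 < h \<Longrightarrow> 0 \<le> Hy \<Omega> h i j" by (simp add: Hy_def)

theorem lemma4p6:
  fixes \<Omega> :: "(real \<times> real) set" and h \<rho> m II :: real and c :: "real \<times> real"
  assumes "open \<Omega>" and "connected \<Omega>" and "\<Omega> \<noteq> {}" and "bounded \<Omega>"
    and "h > 0" and "\<rho> > 0" and "m > 0" and "II > 0"
    and xtilde_defined: "\<forall>(i, j)\<in>OmegaH \<Omega> h.
          frontier (cell h i j) \<inter> frontier \<Omega> = {} \<or>
          (\<exists>x y. frontier (cell h i j) \<inter> frontier \<Omega> = {x, y})"
  shows "(\<forall>p q. (\<Sum>k\<in>OmegaH \<Omega> h. Lh \<Omega> h \<rho> m II c p k * q k)
               = (\<Sum>k\<in>OmegaH \<Omega> h. p k * Lh \<Omega> h \<rho> m II c q k))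
       \<and> (\<forall>p. 0 \<le> (\<Sum>k\<in>OmegaH \<Omega> h. Lh \<Omega> h \<rho> m II c p k * p k))
       \<and> (\<forall>p. (\<forall>k\<in>OmegaH \<Omega> h. Lh \<Omega> h \<rho> m II c p k = 0)
               \<longleftrightarrow> (\<exists>a::real. \<forall>k\<in>OmegaH \<Omega> h. p k = a))"
proof -
  note op = assms(1) and conn = assms(2) and ne = assms(3) and bd = assms(4)
  note h = assms(5) and rho = assms(6) and mpos = assms(7) and IIpos = assms(8)
  define K where "K = OmegaH \<Omega> h"
  have fin: "finite K" unfolding K_def by (rule finite_OmegaH[OF bd h])
  have m0: "m \<noteq> 0" and II0: "II \<noteq> 0" and r0: "\<rho> \<noteq> 0" using mpos IIpos rho by auto
  note BF = Bform[OF fin[unfolded K_def] h m0 II0 r0]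
  define T1 where "T1 = (\<lambda>P W. \<Sum>k\<in>K. Hx \<Omega> h (fst k) (snd k) / \<rho> * Gx h P (fst k) (snd k) * Gx h W (fst k) (snd k)
       + Hy \<Omega> h (fst k) (snd k) / \<rho> * Gy h P (fst k) (snd k) * Gy h W (fst k) (snd k))"
  have BF': "(\<Sum>k\<in>K. Lh \<Omega> h \<rho> m II c p k * w k) = T1 (extK \<Omega> h p) (extK \<Omega> h w)
    + h^2 / m * (SX \<Omega> h (extK \<Omega> h p) * SX \<Omega> h (extK \<Omega> h w) + SY \<Omega> h (extK \<Omega> h p) * SY \<Omega> h (extK \<Omega> h w))
    + h^2 / II * (SZ \<Omega> h c (extK \<Omega> h p) * SZ \<Omega> h c (extK \<Omega> h w))" for p w
    unfolding T1_def K_def by (rule BF)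
  have T1sym: "T1 P W = T1 W P" for P W unfolding T1_def by (simp add: algebra_simps)
  have T1nn: "0 \<le> T1 P P" for P
    unfolding T1_def using Hx_nonneg[OF h] Hy_nonneg[OF h] rho
    by (intro sum_nonneg add_nonneg_nonneg) (auto simp: mult.assoc)
  have sym: "(\<Sum>k\<in>K. Lh \<Omega> h \<rho> m II c p k * q k) = (\<Sum>k\<in>K. p k * Lh \<Omega> h \<rho> m II c q k)" for p q
  proof -
    have "(\<Sum>k\<in>K. p k * Lh \<Omega> h \<rho> m II c q k) = (\<Sum>k\<in>K. Lh \<Omega> h \<rho> m II c q k * p k)"
      by (simp add: mult.commute)
    then show ?thesis unfolding BF' using T1sym by (simp add: algebra_simps)
  qed
  have quad: "(\<Sum>k\<in>K. Lh \<Omega> h \<rho> m II c p k * p k) = T1 (extK \<Omega> h p) (extK \<Omega> h p)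
    + h^2 / m * ((SX \<Omega> h (extK \<Omega> h p))^2 + (SY \<Omega> h (extK \<Omega> h p))^2)
    + h^2 / II * (SZ \<Omega> h c (extK \<Omega> h p))^2" for p
    unfolding BF' by (simp add: power2_eq_square)
  have psd: "0 \<le> (\<Sum>k\<in>K. Lh \<Omega> h \<rho> m II c p k * p k)" for p
    unfolding quad using T1nn mpos IIpos by (intro add_nonneg_nonneg) auto
  have ker1: "\<exists>a. \<forall>k\<in>K. p k = a" if z: "\<forall>k\<in>K. Lh \<Omega> h \<rho> m II c p k = 0" for p
  proof -
    define P where "P = extK \<Omega> h p"
    have "(\<Sum>k\<in>K. Lh \<Omega> h \<rho> m II c p k * p k) = 0" using z by simp
    then have "T1 P P + h^2 / m * ((SX \<Omega> h P)^2 + (SY \<Omega> h P)^2) + h^2 / II * (SZ \<Omega> h c P)^2 = 0"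
      unfolding quad P_def .
    moreover have "0 \<le> h^2 / m * ((SX \<Omega> h P)^2 + (SY \<Omega> h P)^2)" using mpos by auto
    moreover have "0 \<le> h^2 / II * (SZ \<Omega> h c P)^2" using IIpos by auto
    ultimately have T0: "T1 P P = 0" using T1nn[of P] by linarith
    have each: "Hx \<Omega> h (fst k) (snd k) / \<rho> * Gx h P (fst k) (snd k) * Gx h P (fst k) (snd k)
       + Hy \<Omega> h (fst k) (snd k) / \<rho> * Gy h P (fst k) (snd k) * Gy h P (fst k) (snd k) = 0" if "k \<in> K" for k
    proof -
      have "\<forall>k\<in>K. Hx \<Omega> h (fst k) (snd k) / \<rho> * Gx h P (fst k) (snd k) * Gx h P (fst k) (snd k)
       + Hy \<Omega> h (fst k) (snd k) / \<rho> * Gy h P (fst k) (snd k) * Gy h P (fst k) (snd k) = 0"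
        using T0 unfolding T1_def
        by (subst (asm) sum_nonneg_eq_0_iff[OF fin])
           (use Hx_nonneg[OF h] Hy_nonneg[OF h] rho in \<open>auto intro!: add_nonneg_nonneg simp: mult.assoc\<close>)
      then show ?thesis using that by blast
    qed
    have ax: "P (i + 1, j) = P (i, j)" if "Hx \<Omega> h i j > 0" for i j
    proof -
      have k: "(i, j) \<in> K" using Hx_supp[OF h, of \<Omega> i j] that unfolding K_def by auto
      have a: "0 \<le> Hx \<Omega> h i j / \<rho> * Gx h P i j * Gx h P i j" using that rho by (simp add: mult.assoc)
      have b: "0 \<le> Hy \<Omega> h i j / \<rho> * Gy h P i j * Gy h P i j" using Hy_nonneg[OF h] rho by (simp add: mult.assoc)
      have e: "Hx \<Omega> h i j / \<rho> * Gx h P i j * Gx h P i j + Hy \<Omega> h i j / \<rho> * Gy h P i j * Gy h P i j = 0"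
        using each[OF k] by simp
      have "Hx \<Omega> h i j / \<rho> * Gx h P i j * Gx h P i j = 0" using e a b by linarith
      then have "Gx h P i j = 0" using that rho by simp
      then show ?thesis using h by (simp add: Gx_def)
    qed
    have ay: "P (i, j + 1) = P (i, j)" if "Hy \<Omega> h i j > 0" for i j
    proof -
      have k: "(i, j) \<in> K" using Hy_supp[OF h, of \<Omega> i j] that unfolding K_def by auto
      have a: "0 \<le> Hy \<Omega> h i j / \<rho> * Gy h P i j * Gy h P i j" using that rho by (simp add: mult.assoc)
      have b: "0 \<le> Hx \<Omega> h i j / \<rho> * Gx h P i j * Gx h P i j" using Hx_nonneg[OF h] rho by (simp add: mult.assoc)
      have e: "Hx \<Omega> h i j / \<rho> * Gx h P i j * Gx h P i j + Hy \<Omega> h i j / \<rho> * Gy h P i j * Gy h P i j = 0"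
        using each[OF k] by simp
      have "Hy \<Omega> h i j / \<rho> * Gy h P i j * Gy h P i j = 0" using e a b by linarith
      then have "Gy h P i j = 0" using that rho by simp
      then show ?thesis using h by (simp add: Gy_def)
    qed
    obtain a where "\<forall>k\<in>OmegaH \<Omega> h. P k = a" using const_K[OF h op conn ne fin[unfolded K_def] ax ay] by blast
    then show ?thesis unfolding P_def extK_def K_def by auto
  qed
  have ker2: "\<forall>k\<in>K. Lh \<Omega> h \<rho> m II c p k = 0" if a: "\<forall>k\<in>K. p k = a" for p a
  proof
    fix k assume k: "k \<in> K"
    define P where "P = extK \<Omega> h p"
    have PK: "\<And>l. l \<in> K \<Longrightarrow> P l = a" using a unfolding P_def extK_def K_def by auto
    have qx0: "qx \<Omega> h \<rho> P l = 0" for l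
    proof (cases "Hx \<Omega> h (fst l) (snd l) = 0")
      case False
      have "(fst l, snd l) \<in> K \<and> (fst l + 1, snd l) \<in> K" using Hx_supp[OF h False] unfolding K_def .
      then have "P (fst l + 1, snd l) = a" "P (fst l, snd l) = a" using PK by blast+
      then show ?thesis unfolding qx_def Gx_def by simp
    qed (simp add: qx_def)
    have qy0: "qy \<Omega> h \<rho> P l = 0" for l
    proof (cases "Hy \<Omega> h (fst l) (snd l) = 0")
      case False
      have "(fst l, snd l) \<in> K \<and> (fst l, snd l + 1) \<in> K" using Hy_supp[OF h False] unfolding K_def .
      then have "P (fst l, snd l + 1) = a" "P (fst l, snd l) = a" using PK by blast+
      then show ?thesis unfolding qy_def Gy_def by simp
    qed (simp add: qy_def)
    have sx: "SX \<Omega> h P = 0"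
    proof -
      have "SX \<Omega> h P = a * (\<Sum>l\<in>K. fst (GH \<Omega> h l))"
        unfolding SX_def K_def[symmetric] by (simp add: sum_distrib_left PK)
      then show ?thesis using sum_GH_fst[OF fin[unfolded K_def] h] unfolding K_def by simp
    qed
    have sy: "SY \<Omega> h P = 0"
    proof -
      have "SY \<Omega> h P = a * (\<Sum>l\<in>K. snd (GH \<Omega> h l))"
        unfolding SY_def K_def[symmetric] by (simp add: sum_distrib_left PK)
      then show ?thesis using sum_GH_snd[OF fin[unfolded K_def] h] unfolding K_def by simp
    qed
    have sz: "SZ \<Omega> h c P = 0"
    proof -
      have "SZ \<Omega> h c P = a * (\<Sum>l\<in>K. Jh \<Omega> h c l)"
        unfolding SZ_def K_def[symmetric] by (simp add: sum_distrib_left PK)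
      then show ?thesis using sum_J[OF fin[unfolded K_def] h op xtilde_defined] unfolding K_def by simp
    qed
    show "Lh \<Omega> h \<rho> m II c p k = 0"
      unfolding Lh_expand P_def[symmetric] qx0 qy0 sx sy sz by simp
  qed
  show ?thesis
    using sym psd ker1 ker2 unfolding K_def by blast
qed

end
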